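(* Let $N_F\ge1$, $N=2^{N_F}$, and let $i\mapsto|i|\in\{0,1\}$ be a parity function on $\{1,\dots,N\}$ with exactly $N/2$ even and $N/2$ odd indices. Let $$\tilde{\mathcal M}=\Big\{b=(b_1,\dots,b_N)\in\mathbb C^N:\ \sum_i|b_i|^2=1,\ (b_i)_{|i|=0}\neq0,\ (b_i)_{|i|=1}\neq0\Big\}$$ with the subspace topology, and let $\mathcal M=\tilde{\mathcal M}/\!\sim$ with the quotient topology, where $b\sim b'$ iff there exist $e^{i\beta}\in\mathrm U(1)$ and $\eta\in\{\pm1\}$ with $b'_i=e^{i\beta}\eta^{|i|}b_i$ for all $i$. Then $\pi_1(\mathcal M)\cong\mathbb Z$ if $N_F=1$, and $\pi_1(\mathcal M)\cong\mathbb Z/2\mathbb Z$ if $N_F\ge2$.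
   Context: $\mathcal M$ is the space of gauge-equivalence classes of injective fMPSs in canonical form with bond dimension $2$ ($n=1$) and Wall invariant $(-)$ for a system with $N_F$ fermion flavors, written in the gauge $A^i=\sigma_x^{|i|}\otimes b_i$; by the fundamental theorem the residual gauge freedom is exactly $b_i\mapsto e^{i\beta}\eta^{|i|}b_i$. The non-vanishing conditions on the even and odd components are the injectivity conditions. *)

theory Defs
  imports "HOL-Analysis.Analysis" "HOL-Algebra.Elementary_Groups"
begin

definition eq_classes :: "'a topology \<Rightarrow> ('a \<Rightarrow> 'a \<Rightarrow> bool) \<Rightarrow> 'a set set" where
  "eq_classes X R = {{y \<in> topspace X. R x y} | x. x \<in> topspace X}"

definition quotient_topology :: "'a topology \<Rightarrow> ('a \<Rightarrow> 'a \<Rightarrow> bool) \<Rightarrow> 'a set topology" where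
  "quotient_topology X R = topology (\<lambda>U. U \<subseteq> eq_classes X R \<and> openin X (\<Union>U))"

text \<open>Homotopy of paths relative to the endpoints (only the values on [0,1] matter).\<close>

definition path_homotopic :: "'a topology \<Rightarrow> (real \<Rightarrow> 'a) \<Rightarrow> (real \<Rightarrow> 'a) \<Rightarrow> bool" where
  "path_homotopic X p q \<longleftrightarrow>
     (\<exists>h. continuous_map (prod_topology (top_of_set {0..1::real}) (top_of_set {0..1::real})) X h \<and>
          (\<forall>s\<in>{0..1}. h (0, s) = p s \<and> h (1, s) = q s) \<and>
          (\<forall>t\<in>{0..1}. h (t, 0) = p 0 \<and> h (t, 1) = p 1))"

definition loops_at :: "'a topology \<Rightarrow> 'a \<Rightarrow> (real \<Rightarrow> 'a) set" where
  "loops_at X x0 = {g. pathin X g \<and> g 0 = x0 \<and> g 1 = x0}"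

definition loop_class :: "'a topology \<Rightarrow> 'a \<Rightarrow> (real \<Rightarrow> 'a) \<Rightarrow> (real \<Rightarrow> 'a) set" where
  "loop_class X x0 g = {g' \<in> loops_at X x0. path_homotopic X g g'}"

definition path_join :: "(real \<Rightarrow> 'a) \<Rightarrow> (real \<Rightarrow> 'a) \<Rightarrow> real \<Rightarrow> 'a" where
  "path_join p q = (\<lambda>x. if x \<le> 1/2 then p (2 * x) else q (2 * x - 1))"

definition fundamental_group :: "'a topology \<Rightarrow> 'a \<Rightarrow> (real \<Rightarrow> 'a) set monoid" where
  "fundamental_group X x0 =
     \<lparr>carrier = loop_class X x0 ` loops_at X x0,
      monoid.mult = (\<lambda>A B. loop_class X x0 (path_join (SOME a. a \<in> A) (SOME b. b \<in> B))),
      one = loop_class X x0 (\<lambda>_. x0)\<rparr>"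

text \<open>par i = True means |i| = 1 (odd), False means |i| = 0 (even).\<close>

definition Mtilde :: "('n::finite \<Rightarrow> bool) \<Rightarrow> (complex^'n) set" where
  "Mtilde par = {b. (\<Sum>i\<in>UNIV. (cmod (b $ i))\<^sup>2) = 1 \<and>
                    (\<exists>i. \<not> par i \<and> b $ i \<noteq> 0) \<and> (\<exists>i. par i \<and> b $ i \<noteq> 0)}"

definition gauge_equiv :: "('n::finite \<Rightarrow> bool) \<Rightarrow> complex^'n \<Rightarrow> complex^'n \<Rightarrow> bool" where
  "gauge_equiv par b b' \<longleftrightarrow>
     (\<exists>\<beta>::real. \<exists>\<eta>\<in>{1, -1::complex}.
        \<forall>i. b' $ i = exp (\<i> * of_real \<beta>) * (if par i then \<eta> else 1) * b $ i)"

definition Mspace :: "('n::finite \<Rightarrow> bool) \<Rightarrow> (complex^'n) set topology" where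
  "Mspace par = quotient_topology (top_of_set (Mtilde par)) (gauge_equiv par)"

end

theory Submission
  imports Defs "HOL-Complex_Analysis.Complex_Analysis"
begin


lemma loop_class_eq:
  assumes eqv: "\<And>g g'. g \<in> loops_at X x0 \<Longrightarrow> g' \<in> loops_at X x0 \<Longrightarrow> \<kappa> g = \<kappa> g' \<longleftrightarrow> path_homotopic X g g'"
    and g: "g \<in> loops_at X x0"
  shows "loop_class X x0 g = {g' \<in> loops_at X x0. \<kappa> g' = \<kappa> g}"
proof -
  have "\<And>x. x \<in> loops_at X x0 \<Longrightarrow> path_homotopic X g x \<longleftrightarrow> \<kappa> x = \<kappa> g"
    using eqv[OF g] by metis
  thus ?thesis unfolding loop_class_def by blast
qed

lemma iso_crit:
  fixes \<kappa> :: "(real \<Rightarrow> 'a) \<Rightarrow> 'b" and G :: "('b,'c) monoid_scheme"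
  assumes inG: "\<And>g. g \<in> loops_at X x0 \<Longrightarrow> \<kappa> g \<in> carrier G"
    and eqv: "\<And>g g'. g \<in> loops_at X x0 \<Longrightarrow> g' \<in> loops_at X x0 \<Longrightarrow> \<kappa> g = \<kappa> g' \<longleftrightarrow> path_homotopic X g g'"
    and sur: "carrier G \<subseteq> \<kappa> ` loops_at X x0"
    and join: "\<And>g g'. g \<in> loops_at X x0 \<Longrightarrow> g' \<in> loops_at X x0 \<Longrightarrow>
                 path_join g g' \<in> loops_at X x0 \<and> \<kappa> (path_join g g') = \<kappa> g \<otimes>\<^bsub>G\<^esub> \<kappa> g'"
  shows "fundamental_group X x0 \<cong> G"
proof -
  let ?L = "loops_at X x0"
  define \<Phi> where "\<Phi> A = \<kappa> (SOME a. a \<in> A)" for A :: "(real \<Rightarrow> 'a) set"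
  have cls: "loop_class X x0 g = {g' \<in> ?L. \<kappa> g' = \<kappa> g}" if "g \<in> ?L" for g
    by (rule loop_class_eq[OF eqv that])
  have some: "(SOME a. a \<in> loop_class X x0 g) \<in> ?L \<and> \<kappa> (SOME a. a \<in> loop_class X x0 g) = \<kappa> g"
    if "g \<in> ?L" for g
  proof -
    have "g \<in> loop_class X x0 g" using cls[OF that] that by auto
    hence "(SOME a. a \<in> loop_class X x0 g) \<in> loop_class X x0 g" by (rule someI[where P="\<lambda>a. a \<in> loop_class X x0 g"])
    thus ?thesis using cls[OF that] by auto
  qed
  have Phi: "\<Phi> (loop_class X x0 g) = \<kappa> g" if "g \<in> ?L" for g
    using some[OF that] by (simp add: \<Phi>_def)
  have car: "carrier (fundamental_group X x0) = loop_class X x0 ` ?L"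
    by (simp add: fundamental_group_def)
  have "\<Phi> \<in> Group.iso (fundamental_group X x0) G"
    unfolding iso_def hom_def
  proof (intro CollectI conjI ballI)
    show "\<Phi> \<in> carrier (fundamental_group X x0) \<rightarrow> carrier G"
      using car Phi inG by auto
    fix A B assume A: "A \<in> carrier (fundamental_group X x0)" and B: "B \<in> carrier (fundamental_group X x0)"
    then obtain g g' where g: "g \<in> ?L" "A = loop_class X x0 g" and g': "g' \<in> ?L" "B = loop_class X x0 g'"
      using car by auto
    define a where "a = (SOME a. a \<in> A)"
    define b where "b = (SOME b. b \<in> B)"
    have a: "a \<in> ?L" "\<kappa> a = \<kappa> g" using some[OF g(1)] g(2) a_def by auto
    have b: "b \<in> ?L" "\<kappa> b = \<kappa> g'" using some[OF g'(1)] g'(2) b_def by auto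
    have "A \<otimes>\<^bsub>fundamental_group X x0\<^esub> B = loop_class X x0 (path_join a b)"
      by (simp add: fundamental_group_def a_def b_def)
    hence "\<Phi> (A \<otimes>\<^bsub>fundamental_group X x0\<^esub> B) = \<kappa> (path_join a b)"
      using Phi join[OF a(1) b(1)] by simp
    also have "\<dots> = \<kappa> a \<otimes>\<^bsub>G\<^esub> \<kappa> b" using join[OF a(1) b(1)] by simp
    also have "\<dots> = \<Phi> A \<otimes>\<^bsub>G\<^esub> \<Phi> B" using a b Phi g g' by simp
    finally show "\<Phi> (A \<otimes>\<^bsub>fundamental_group X x0\<^esub> B) = \<Phi> A \<otimes>\<^bsub>G\<^esub> \<Phi> B" .
  next
    show "bij_betw \<Phi> (carrier (fundamental_group X x0)) (carrier G)"
      unfolding bij_betw_def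
    proof
      show "inj_on \<Phi> (carrier (fundamental_group X x0))"
      proof (rule inj_onI)
        fix A B assume A: "A \<in> carrier (fundamental_group X x0)" and B: "B \<in> carrier (fundamental_group X x0)"
          and e: "\<Phi> A = \<Phi> B"
        then obtain g g' where g: "g \<in> ?L" "A = loop_class X x0 g" and g': "g' \<in> ?L" "B = loop_class X x0 g'"
          using car by auto
        thus "A = B" using e Phi cls by auto
      qed
      show "\<Phi> ` carrier (fundamental_group X x0) = carrier G"
      proof
        show "\<Phi> ` carrier (fundamental_group X x0) \<subseteq> carrier G" using car Phi inG by auto
        show "carrier G \<subseteq> \<Phi> ` carrier (fundamental_group X x0)"
        proof
          fix y assume "y \<in> carrier G"
          then obtain g where "g \<in> ?L" "y = \<kappa> g" using sur by auto
          thus "y \<in> \<Phi> ` carrier (fundamental_group X x0)" using car Phi by (metis image_eqI)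
        qed
      qed
    qed
  qed
  thus ?thesis unfolding is_iso_def by blast
qed


lemma pathin_in_topspace: "pathin X g \<Longrightarrow> s \<in> {0..1} \<Longrightarrow> g s \<in> topspace X"
  unfolding pathin_def using continuous_map_image_subset_topspace by fastforce

lemma path_homotopic_compose:
  assumes "continuous_map X Y \<phi>" "path_homotopic X g g'"
  shows "path_homotopic Y (\<phi> \<circ> g) (\<phi> \<circ> g')"
proof -
  obtain h where h: "continuous_map (prod_topology (top_of_set {0..1::real}) (top_of_set {0..1::real})) X h"
    "\<forall>s\<in>{0..1}. h (0, s) = g s \<and> h (1, s) = g' s" "\<forall>t\<in>{0..1}. h (t, 0) = g 0 \<and> h (t, 1) = g 1"
    using assms(2) unfolding path_homotopic_def by blast
  show ?thesis unfolding path_homotopic_def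
    by (rule exI[where x="\<phi> \<circ> h"]) (use h continuous_map_compose[OF h(1) assms(1)] in auto)
qed

lemma path_homotopic_eq_on:
  assumes "pathin X g" "\<And>s. s \<in> {0..1} \<Longrightarrow> g s = g' s"
  shows "path_homotopic X g g'"
proof -
  have "continuous_map (prod_topology (top_of_set {0..1::real}) (top_of_set {0..1::real})) X (g \<circ> snd)"
    using assms(1) unfolding pathin_def by (intro continuous_map_compose[OF continuous_map_snd]) auto
  thus ?thesis unfolding path_homotopic_def
    by (intro exI[where x="g \<circ> snd"]) (use assms(2) in auto)
qed

lemma homeo_iso:
  fixes \<kappa> :: "(real \<Rightarrow> 'b::topological_space) \<Rightarrow> 'c" and G :: "('c,'d) monoid_scheme"
  assumes phi: "continuous_map X (top_of_set S) \<phi>" and psi: "continuous_map (top_of_set S) X \<psi>"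
    and psiphi: "\<And>x. x \<in> topspace X \<Longrightarrow> \<psi> (\<phi> x) = x"
    and phipsi: "\<And>y. y \<in> S \<Longrightarrow> \<phi> (\<psi> y) = y"
    and x0: "x0 \<in> topspace X"
    and inG: "\<And>g. g \<in> loops_at (top_of_set S) (\<phi> x0) \<Longrightarrow> \<kappa> g \<in> carrier G"
    and eqv: "\<And>g g'. g \<in> loops_at (top_of_set S) (\<phi> x0) \<Longrightarrow> g' \<in> loops_at (top_of_set S) (\<phi> x0) \<Longrightarrow>
                 \<kappa> g = \<kappa> g' \<longleftrightarrow> path_homotopic (top_of_set S) g g'"
    and sur: "carrier G \<subseteq> \<kappa> ` loops_at (top_of_set S) (\<phi> x0)"
    and join: "\<And>g g'. g \<in> loops_at (top_of_set S) (\<phi> x0) \<Longrightarrow> g' \<in> loops_at (top_of_set S) (\<phi> x0) \<Longrightarrow>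
                 path_join g g' \<in> loops_at (top_of_set S) (\<phi> x0) \<and> \<kappa> (path_join g g') = \<kappa> g \<otimes>\<^bsub>G\<^esub> \<kappa> g'"
  shows "fundamental_group X x0 \<cong> G"
proof -
  let ?Y = "top_of_set S"
  have L: "\<phi> \<circ> g \<in> loops_at ?Y (\<phi> x0)" if "g \<in> loops_at X x0" for g
  proof -
    have "pathin X g" "g 0 = x0" "g 1 = x0" using that unfolding loops_at_def by auto
    moreover have "pathin ?Y (\<phi> \<circ> g)" using \<open>pathin X g\<close> unfolding pathin_def
      by (rule continuous_map_compose[OF _ phi])
    ultimately show ?thesis unfolding loops_at_def by auto
  qed
  have phx: "\<phi> x0 \<in> S" using phi x0 continuous_map_image_subset_topspace by fastforce
  have E: "path_homotopic X g g' \<longleftrightarrow> path_homotopic ?Y (\<phi> \<circ> g) (\<phi> \<circ> g')"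
    if g: "g \<in> loops_at X x0" and g': "g' \<in> loops_at X x0" for g g'
  proof
    assume "path_homotopic X g g'" thus "path_homotopic ?Y (\<phi> \<circ> g) (\<phi> \<circ> g')"
      by (rule path_homotopic_compose[OF phi])
  next
    assume "path_homotopic ?Y (\<phi> \<circ> g) (\<phi> \<circ> g')"
    hence hh: "path_homotopic X (\<psi> \<circ> (\<phi> \<circ> g)) (\<psi> \<circ> (\<phi> \<circ> g'))"
      by (rule path_homotopic_compose[OF psi])
    have tg: "g s \<in> topspace X" "g' s \<in> topspace X" if "s \<in> {0..1}" for s
      using g g' that pathin_in_topspace unfolding loops_at_def by auto
    from hh obtain h where h: "continuous_map (prod_topology (top_of_set {0..1::real}) (top_of_set {0..1::real})) X h"
      "\<forall>s\<in>{0..1}. h (0, s) = (\<psi> \<circ> (\<phi> \<circ> g)) s \<and> h (1, s) = (\<psi> \<circ> (\<phi> \<circ> g')) s"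
      "\<forall>t\<in>{0..1}. h (t, 0) = (\<psi> \<circ> (\<phi> \<circ> g)) 0 \<and> h (t, 1) = (\<psi> \<circ> (\<phi> \<circ> g)) 1"
      unfolding path_homotopic_def by blast
    show "path_homotopic X g g'" unfolding path_homotopic_def
      by (rule exI[where x=h]) (use h tg psiphi in auto)
  qed
  show ?thesis
  proof (rule iso_crit[where \<kappa>="\<lambda>g. \<kappa> (\<phi> \<circ> g)"])
    show "\<And>g. g \<in> loops_at X x0 \<Longrightarrow> \<kappa> (\<phi> \<circ> g) \<in> carrier G" using L inG by blast
    show "\<And>g g'. g \<in> loops_at X x0 \<Longrightarrow> g' \<in> loops_at X x0 \<Longrightarrow>
           (\<kappa> (\<phi> \<circ> g) = \<kappa> (\<phi> \<circ> g')) = path_homotopic X g g'"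
      using L eqv E by blast
    show "carrier G \<subseteq> (\<lambda>g. \<kappa> (\<phi> \<circ> g)) ` loops_at X x0"
    proof
      fix y assume "y \<in> carrier G"
      then obtain g where g: "g \<in> loops_at ?Y (\<phi> x0)" "y = \<kappa> g" using sur by auto
      have pg: "pathin ?Y g" using g unfolding loops_at_def by auto
      have l2: "\<psi> \<circ> g \<in> loops_at X x0"
      proof -
        have "pathin X (\<psi> \<circ> g)" using pg unfolding pathin_def by (rule continuous_map_compose[OF _ psi])
        thus ?thesis using g psiphi[OF x0] unfolding loops_at_def by auto
      qed
      have "path_homotopic ?Y g (\<phi> \<circ> (\<psi> \<circ> g))"
      proof (rule path_homotopic_eq_on[OF pg])
        fix s :: real assume "s \<in> {0..1}"
        hence "g s \<in> S" using pathin_in_topspace[OF pg] by auto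
        thus "g s = (\<phi> \<circ> (\<psi> \<circ> g)) s" using phipsi by simp
      qed
      hence "\<kappa> (\<phi> \<circ> (\<psi> \<circ> g)) = y" using eqv[OF g(1) L[OF l2]] g by simp
      thus "y \<in> (\<lambda>g. \<kappa> (\<phi> \<circ> g)) ` loops_at X x0" using l2 by force
    qed
    fix g g' assume g: "g \<in> loops_at X x0" and g': "g' \<in> loops_at X x0"
    have jj: "\<phi> \<circ> path_join g g' = path_join (\<phi> \<circ> g) (\<phi> \<circ> g')"
      by (auto simp: path_join_def)
    have J: "path_join (\<phi> \<circ> g) (\<phi> \<circ> g') \<in> loops_at ?Y (\<phi> x0)"
      using join[OF L[OF g] L[OF g']] by blast
    have tg: "g s \<in> topspace X" "g' s \<in> topspace X" if "s \<in> {0..1}" for s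
      using g g' that pathin_in_topspace unfolding loops_at_def by auto
    have tj: "path_join g g' s \<in> topspace X" if "s \<in> {0..1}" for s
      using tg that by (auto simp: path_join_def)
    have "pathin ?Y (\<phi> \<circ> path_join g g')" using J jj unfolding loops_at_def by auto
    hence "pathin X (\<psi> \<circ> (\<phi> \<circ> path_join g g'))"
      unfolding pathin_def by (rule continuous_map_compose[OF _ psi])
    hence "pathin X (path_join g g')"
      unfolding pathin_def by (rule continuous_map_eq) (use tj psiphi in auto)
    moreover have "path_join g g' 0 = x0" "path_join g g' 1 = x0"
      using g g' by (auto simp: path_join_def loops_at_def)
    ultimately show "path_join g g' \<in> loops_at X x0 \<and> \<kappa> (\<phi> \<circ> path_join g g') = \<kappa> (\<phi> \<circ> g) \<otimes>\<^bsub>G\<^esub> \<kappa> (\<phi> \<circ> g')"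
      using join[OF L[OF g] L[OF g']] jj unfolding loops_at_def by auto
  qed
qed


lemma path_join_eq: "path_join = joinpaths"
  by (auto simp: path_join_def joinpaths_def fun_eq_iff)

lemma loops_at_eu: "loops_at (top_of_set S) y0 = {g. path g \<and> path_image g \<subseteq> S \<and> pathstart g = y0 \<and> pathfinish g = y0}"
  by (auto simp: loops_at_def pathin_canon_iff path_image_def pathstart_def pathfinish_def)

lemma path_homotopic_eu: "path_homotopic (top_of_set S) g g' \<longleftrightarrow> homotopic_paths S g g'"
  unfolding path_homotopic_def homotopic_paths prod_topology_subtopology_eu continuous_map_subtopology_eu
  by (auto simp: pathstart_def pathfinish_def image_subset_iff Pi_iff)


lemma open_from_sections:
  assumes sec: "\<And>b. b \<in> M \<Longrightarrow> \<exists>W s. openin (top_of_set S) W \<and> f b \<in> W \<and> continuous_on W s \<and>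
                  s ` W \<subseteq> M \<and> (\<forall>y\<in>W. f (s y) = y) \<and> s (f b) = b"
    and V: "openin (top_of_set M) V"
  shows "openin (top_of_set S) (f ` V)"
proof (subst openin_subopen, intro ballI)
  fix z assume "z \<in> f ` V"
  then obtain b where b: "b \<in> V" "z = f b" by auto
  have "b \<in> M" using V b openin_imp_subset by blast
  then obtain W s where W: "openin (top_of_set S) W" "f b \<in> W" "continuous_on W s"
      "s ` W \<subseteq> M" "\<forall>y\<in>W. f (s y) = y" "s (f b) = b"
    using sec by blast
  have "openin (top_of_set W) (W \<inter> s -` V)"
    by (rule continuous_openin_preimage[OF W(3) _ V]) (use W(4) in auto)
  hence o: "openin (top_of_set S) (W \<inter> s -` V)" using W(1) openin_trans by blast
  have "W \<inter> s -` V \<subseteq> f ` V"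
  proof
    fix y assume "y \<in> W \<inter> s -` V"
    thus "y \<in> f ` V" using W(5) by (metis IntD1 IntD2 image_eqI vimageE)
  qed
  moreover have "z \<in> W \<inter> s -` V" using W b by auto
  ultimately show "\<exists>T. openin (top_of_set S) T \<and> z \<in> T \<and> T \<subseteq> f ` V" using o by blast
qed

lemma quotient_homeo:
  assumes contf: "continuous_on M f" and S: "S = f ` M"
    and Req: "\<And>x y. x \<in> M \<Longrightarrow> y \<in> M \<Longrightarrow> R x y \<longleftrightarrow> f x = f y"
    and opn: "\<And>V. openin (top_of_set M) V \<Longrightarrow> openin (top_of_set S) (f ` V)"
  shows "continuous_map (quotient_topology (top_of_set M) R) (top_of_set S) (\<lambda>c. f (SOME x. x \<in> c))"
    "continuous_map (top_of_set S) (quotient_topology (top_of_set M) R) (\<lambda>y. {x \<in> M. f x = y})"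
    "\<And>c. c \<in> topspace (quotient_topology (top_of_set M) R) \<Longrightarrow> {x \<in> M. f x = f (SOME x. x \<in> c)} = c"
    "\<And>y. y \<in> S \<Longrightarrow> f (SOME x. x \<in> {x \<in> M. f x = y}) = y"
proof -
  define \<psi> where "\<psi> y = {x \<in> M. f x = y}" for y
  define \<phi> where "\<phi> c = f (SOME x. x \<in> c)" for c
  have EC: "eq_classes (top_of_set M) R = \<psi> ` S"
  proof -
    have "eq_classes (top_of_set M) R = {{y \<in> M. f x = f y} | x. x \<in> M}"
      unfolding eq_classes_def using Req by (auto intro!: Collect_cong)
    also have "\<dots> = \<psi> ` S"
    proof -
      have "{y \<in> M. f x = f y} = \<psi> (f x)" for x by (auto simp: \<psi>_def)
      thus ?thesis unfolding S by blast
    qed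
    finally show ?thesis .
  qed
  define P where "P U \<longleftrightarrow> U \<subseteq> \<psi> ` S \<and> openin (top_of_set M) (\<Union>U)" for U
  have disj: "\<Union>(U \<inter> V) = \<Union>U \<inter> \<Union>V" if UV: "U \<subseteq> \<psi> ` S" "V \<subseteq> \<psi> ` S" for U V
  proof
    show "\<Union>U \<inter> \<Union>V \<subseteq> \<Union>(U \<inter> V)"
    proof
      fix x assume "x \<in> \<Union>U \<inter> \<Union>V"
      then obtain A B where AB: "x \<in> A" "A \<in> U" "x \<in> B" "B \<in> V" by auto
      then obtain a b where "A = \<psi> a" "B = \<psi> b" using UV by blast
      hence "A = B" using AB by (auto simp: \<psi>_def)
      thus "x \<in> \<Union>(U \<inter> V)" using AB by auto
    qed
  qed auto
  have isT: "istopology P"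
    unfolding istopology_def P_def
  proof (intro conjI allI impI)
    fix U V assume "U \<subseteq> \<psi> ` S \<and> openin (top_of_set M) (\<Union> U)" "V \<subseteq> \<psi> ` S \<and> openin (top_of_set M) (\<Union> V)"
    thus "U \<inter> V \<subseteq> \<psi> ` S" "openin (top_of_set M) (\<Union> (U \<inter> V))" using disj by auto
  next
    fix K assume "\<forall>U\<in>K. U \<subseteq> \<psi> ` S \<and> openin (top_of_set M) (\<Union> U)"
    show "\<Union>K \<subseteq> \<psi> ` S" "openin (top_of_set M) (\<Union> (\<Union>K))"
    proof -
      have e: "\<Union>(\<Union>K) = \<Union>(Union ` K)" by auto
      have "openin (top_of_set M) (\<Union>(Union ` K))"
        by (rule openin_Union) (use \<open>\<forall>U\<in>K. U \<subseteq> \<psi> ` S \<and> openin (top_of_set M) (\<Union> U)\<close> in auto)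
      thus "\<Union>K \<subseteq> \<psi> ` S" "openin (top_of_set M) (\<Union> (\<Union>K))"
        using e \<open>\<forall>U\<in>K. U \<subseteq> \<psi> ` S \<and> openin (top_of_set M) (\<Union> U)\<close> by auto
    qed
  qed
  have QT: "quotient_topology (top_of_set M) R = topology P"
    unfolding quotient_topology_def EC P_def by simp
  have oQ: "openin (quotient_topology (top_of_set M) R) U \<longleftrightarrow> U \<subseteq> \<psi> ` S \<and> openin (top_of_set M) (\<Union>U)" for U
    using QT isT by (simp add: P_def topology_inverse')
  have UM: "\<Union>(\<psi> ` S) = M" unfolding S \<psi>_def by auto
  have tQ: "topspace (quotient_topology (top_of_set M) R) = \<psi> ` S"
  proof -
    have "openin (quotient_topology (top_of_set M) R) (\<psi> ` S)" using oQ UM by simp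
    hence "\<psi> ` S \<subseteq> topspace (quotient_topology (top_of_set M) R)" by (rule openin_subset)
    moreover have "topspace (quotient_topology (top_of_set M) R) \<subseteq> \<psi> ` S"
      unfolding topspace_def using oQ by auto
    ultimately show ?thesis by blast
  qed
  have psiS: "\<psi> y \<noteq> {}" "\<phi> (\<psi> y) = y" if "y \<in> S" for y
  proof -
    show "\<psi> y \<noteq> {}" using that unfolding S \<psi>_def by auto
    hence "(SOME x. x \<in> \<psi> y) \<in> \<psi> y" by (meson ex_in_conv someI_ex)
    thus "\<phi> (\<psi> y) = y" unfolding \<phi>_def \<psi>_def by simp
  qed
  show "\<And>y. y \<in> S \<Longrightarrow> f (SOME x. x \<in> {x \<in> M. f x = y}) = y" using psiS(2) unfolding \<phi>_def \<psi>_def by simp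
  show "\<And>c. c \<in> topspace (quotient_topology (top_of_set M) R) \<Longrightarrow> {x \<in> M. f x = f (SOME x. x \<in> c)} = c"
    using tQ psiS(2) unfolding \<phi>_def \<psi>_def by auto
  show "continuous_map (quotient_topology (top_of_set M) R) (top_of_set S) (\<lambda>c. f (SOME x. x \<in> c))"
    unfolding continuous_map_def
  proof (intro conjI allI impI)
    show "(\<lambda>c. f (SOME x. x \<in> c)) \<in> topspace (quotient_topology (top_of_set M) R) \<rightarrow> topspace (top_of_set S)"
      using tQ psiS(2) unfolding \<phi>_def by auto
    fix U assume U: "openin (top_of_set S) U"
    let ?A = "{c \<in> topspace (quotient_topology (top_of_set M) R). f (SOME x. x \<in> c) \<in> U}"
    have A: "?A = \<psi> ` U" using tQ psiS(2) U openin_imp_subset unfolding \<phi>_def by fastforce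
    have "\<Union>(\<psi> ` U) = M \<inter> f -` U" using U openin_imp_subset unfolding \<psi>_def S by auto
    moreover have "openin (top_of_set M) (M \<inter> f -` U)"
      by (rule continuous_openin_preimage[OF contf _ U]) (simp add: S)
    ultimately show "openin (quotient_topology (top_of_set M) R) ?A"
      unfolding A oQ using openin_imp_subset[OF U] by auto
  qed
  show "continuous_map (top_of_set S) (quotient_topology (top_of_set M) R) (\<lambda>y. {x \<in> M. f x = y})"
    unfolding continuous_map_def
  proof (intro conjI allI impI)
    show "(\<lambda>y. {x \<in> M. f x = y}) \<in> topspace (top_of_set S) \<rightarrow> topspace (quotient_topology (top_of_set M) R)"
      using tQ unfolding \<psi>_def by auto
    fix U assume U: "openin (quotient_topology (top_of_set M) R) U"
    hence U1: "U \<subseteq> \<psi> ` S" "openin (top_of_set M) (\<Union>U)" using oQ by auto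
    have "{y \<in> topspace (top_of_set S). {x \<in> M. f x = y} \<in> U} = f ` (\<Union>U)"
    proof
      show "{y \<in> topspace (top_of_set S). {x \<in> M. f x = y} \<in> U} \<subseteq> f ` \<Union> U"
      proof
        fix y assume "y \<in> {y \<in> topspace (top_of_set S). {x \<in> M. f x = y} \<in> U}"
        hence y: "y \<in> S" "\<psi> y \<in> U" unfolding \<psi>_def by auto
        then obtain x where "x \<in> M" "f x = y" unfolding S by auto
        thus "y \<in> f ` \<Union> U" using y unfolding \<psi>_def by blast
      qed
      show "f ` \<Union> U \<subseteq> {y \<in> topspace (top_of_set S). {x \<in> M. f x = y} \<in> U}"
      proof
        fix y assume "y \<in> f ` \<Union> U"
        then obtain x c where x: "x \<in> c" "c \<in> U" "y = f x" by auto
        then obtain z where z: "z \<in> S" "c = \<psi> z" using U1 by auto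
        hence "f x = z" "x \<in> M" using x unfolding \<psi>_def by auto
        thus "y \<in> {y \<in> topspace (top_of_set S). {x \<in> M. f x = y} \<in> U}"
          using x z unfolding \<psi>_def S by auto
      qed
    qed
    thus "openin (top_of_set S) {y \<in> topspace (top_of_set S). {x \<in> M. f x = y} \<in> U}"
      using opn[OF U1(2)] by simp
  qed
qed


definition LE :: "'a::topological_space set \<Rightarrow> 'a \<Rightarrow> (real \<Rightarrow> 'a) set" where
  "LE S y0 = {g. path g \<and> path_image g \<subseteq> S \<and> pathstart g = y0 \<and> pathfinish g = y0}"

definition crit :: "'a::real_normed_vector set \<Rightarrow> 'a \<Rightarrow> ((real \<Rightarrow> 'a) \<Rightarrow> 'c) \<Rightarrow> ('c,'d) monoid_scheme \<Rightarrow> bool" where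
  "crit S y0 \<kappa> G \<longleftrightarrow>
     (\<forall>g\<in>LE S y0. \<kappa> g \<in> carrier G) \<and>
     (\<forall>g\<in>LE S y0. \<forall>g'\<in>LE S y0. \<kappa> g = \<kappa> g' \<longleftrightarrow> homotopic_paths S g g') \<and>
     carrier G \<subseteq> \<kappa> ` LE S y0 \<and>
     (\<forall>g\<in>LE S y0. \<forall>g'\<in>LE S y0. \<kappa> (g +++ g') = \<kappa> g \<otimes>\<^bsub>G\<^esub> \<kappa> g')"

lemma main_reduction:
  fixes f :: "'a::topological_space \<Rightarrow> 'b::real_normed_vector" and G :: "('c,'d) monoid_scheme"
  assumes contf: "continuous_on M f" and S: "S = f ` M"
    and Req: "\<And>x y. x \<in> M \<Longrightarrow> y \<in> M \<Longrightarrow> R x y \<longleftrightarrow> f x = f y"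
    and sec: "\<And>b. b \<in> M \<Longrightarrow> \<exists>W s. openin (top_of_set S) W \<and> f b \<in> W \<and> continuous_on W s \<and>
                  s ` W \<subseteq> M \<and> (\<forall>y\<in>W. f (s y) = y) \<and> s (f b) = b"
    and x0: "x0 \<in> topspace (quotient_topology (top_of_set M) R)"
    and cr: "\<And>y0. y0 \<in> S \<Longrightarrow> \<exists>\<kappa>. crit S y0 \<kappa> G"
  shows "fundamental_group (quotient_topology (top_of_set M) R) x0 \<cong> G"
proof -
  let ?Q = "quotient_topology (top_of_set M) R"
  define \<phi> where "\<phi> c = f (SOME x. x \<in> c)" for c
  define \<psi> where "\<psi> y = {x \<in> M. f x = y}" for y
  note qh = quotient_homeo[OF contf S Req open_from_sections[OF sec[unfolded S[symmetric]]]]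
  have phi: "continuous_map ?Q (top_of_set S) \<phi>" using qh(1) unfolding \<phi>_def .
  have psi: "continuous_map (top_of_set S) ?Q \<psi>" using qh(2) unfolding \<psi>_def .
  have y0: "\<phi> x0 \<in> S" using phi x0 continuous_map_image_subset_topspace by fastforce
  obtain \<kappa> where k: "crit S (\<phi> x0) \<kappa> G" using cr[OF y0] by blast
  have LL: "loops_at (top_of_set S) (\<phi> x0) = LE S (\<phi> x0)" by (simp add: loops_at_eu LE_def)
  show ?thesis
  proof (rule homeo_iso[OF phi psi _ _ x0, where \<kappa>=\<kappa>])
    show "\<And>x. x \<in> topspace ?Q \<Longrightarrow> \<psi> (\<phi> x) = x" using qh(3) unfolding \<phi>_def \<psi>_def by blast
    show "\<And>y. y \<in> S \<Longrightarrow> \<phi> (\<psi> y) = y" using qh(4) unfolding \<phi>_def \<psi>_def by blast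
    show "\<And>g. g \<in> loops_at (top_of_set S) (\<phi> x0) \<Longrightarrow> \<kappa> g \<in> carrier G"
      using k unfolding LL crit_def by blast
    show "\<And>g g'. g \<in> loops_at (top_of_set S) (\<phi> x0) \<Longrightarrow> g' \<in> loops_at (top_of_set S) (\<phi> x0) \<Longrightarrow>
           (\<kappa> g = \<kappa> g') = path_homotopic (top_of_set S) g g'"
      using k unfolding LL crit_def path_homotopic_eu by blast
    show "carrier G \<subseteq> \<kappa> ` loops_at (top_of_set S) (\<phi> x0)"
      using k unfolding LL crit_def by blast
    fix g g' assume g: "g \<in> loops_at (top_of_set S) (\<phi> x0)" and g': "g' \<in> loops_at (top_of_set S) (\<phi> x0)"
    have "g +++ g' \<in> LE S (\<phi> x0)" using g g' unfolding LL LE_def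
      by (auto simp: path_image_join)
    thus "path_join g g' \<in> loops_at (top_of_set S) (\<phi> x0) \<and> \<kappa> (path_join g g') = \<kappa> g \<otimes>\<^bsub>G\<^esub> \<kappa> g'"
      using k g g' unfolding LL crit_def path_join_eq by blast
  qed
qed


lemma circle_loop:
  fixes y0 :: complex assumes "y0 \<noteq> 0"
  shows "\<exists>g\<in>LE (- {0}) y0. winding_number g 0 = 1"
proof -
  define r where "r = cmod y0"
  have r: "r > 0" using assms by (simp add: r_def)
  define \<theta> where "\<theta> = (if Arg y0 \<ge> 0 then Arg y0 else Arg y0 + 2 * pi)"
  define a where "a = \<theta> / (2 * pi)"
  have th: "0 \<le> \<theta>" "\<theta> \<le> 2 * pi" using Arg_bounded[of y0] by (auto simp: \<theta>_def)
  have a: "a \<in> {0..1}" using th by (auto simp: a_def field_simps)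
  have e: "exp (\<i> * of_real \<theta>) = exp (\<i> * of_real (Arg y0))"
  proof (cases "Arg y0 \<ge> 0")
    case False
    have "exp (\<i> * of_real (Arg y0 + 2 * pi)) = exp (\<i> * of_real (Arg y0) + \<i> * (of_int 1 * (of_real pi * 2)))"
      by (simp add: algebra_simps)
    also have "\<dots> = exp (\<i> * of_real (Arg y0))" by (rule exp_plus_2pin)
    finally show ?thesis using False by (simp add: \<theta>_def)
  qed (simp add: \<theta>_def)
  define c where "c = circlepath 0 r"
  have ca: "c a = y0"
  proof -
    have "c a = of_real r * exp (\<i> * of_real \<theta>)"
      by (simp add: c_def circlepath a_def algebra_simps)
    also have "\<dots> = y0" using e Arg_eq[OF assms] by (simp add: r_def)
    finally show ?thesis .
  qed
  have cl: "pathfinish c = pathstart c" by (simp add: c_def)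
  have pc: "path c" by (simp add: c_def)
  have ic: "path_image c = sphere 0 r" using r by (simp add: c_def path_image_circlepath)
  have n0: "0 \<notin> path_image c" using ic r by auto
  define g where "g = shiftpath a c"
  have "g \<in> LE (- {0}) y0"
    unfolding LE_def g_def using a cl pc n0 ca
    by (auto simp: path_shiftpath path_image_shiftpath pathstart_shiftpath pathfinish_shiftpath)
  moreover have "winding_number g 0 = 1"
    unfolding g_def using winding_number_shiftpath[OF pc n0 cl a] winding_number_circlepath_centre[OF r]
    by (simp add: c_def)
  ultimately show ?thesis by blast
qed

definition wn :: "(real \<Rightarrow> complex) \<Rightarrow> int" where
  "wn g = \<lfloor>Re (winding_number g 0)\<rfloor>"

lemma wn_eq: assumes "g \<in> LE (- {0}) y0" shows "winding_number g 0 = of_int (wn g)"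
proof -
  have "winding_number g 0 \<in> \<int>" using assms unfolding LE_def
    by (intro integer_winding_number) auto
  then obtain k where "winding_number g 0 = of_int k" by (auto elim: Ints_cases)
  thus ?thesis by (simp add: wn_def)
qed

lemma crit_Z:
  fixes y0 :: complex assumes y0: "y0 \<noteq> 0"
  shows "crit (- {0}) y0 wn integer_group"
  unfolding crit_def
proof (intro conjI ballI)
  let ?L = "LE (- {0}) y0"
  show "\<And>g. g \<in> ?L \<Longrightarrow> wn g \<in> carrier integer_group" by simp
  show "(wn g = wn g') = homotopic_paths (- {0}) g g'" if g: "g \<in> ?L" and g': "g' \<in> ?L" for g g'
  proof -
    have "(wn g = wn g') \<longleftrightarrow> winding_number g 0 = winding_number g' 0"
      using wn_eq[OF g] wn_eq[OF g'] by simp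
    also have "\<dots> \<longleftrightarrow> homotopic_paths (- {0}) g g'"
      using g g' unfolding LE_def
      by (intro winding_number_homotopic_paths_eq) auto
    finally show ?thesis .
  qed
  have J: "g +++ g' \<in> ?L \<and> wn (g +++ g') = wn g + wn g'" if g: "g \<in> ?L" and g': "g' \<in> ?L" for g g'
  proof -
    have gj: "g +++ g' \<in> ?L" using g g' unfolding LE_def by (auto simp: path_image_join)
    have "winding_number (g +++ g') 0 = winding_number g 0 + winding_number g' 0"
      using g g' unfolding LE_def by (intro winding_number_join) auto
    hence "of_int (wn (g +++ g')) = (of_int (wn g + wn g') :: complex)"
      using wn_eq[OF g] wn_eq[OF g'] wn_eq[OF gj] by simp
    thus ?thesis using gj by (simp only: of_int_eq_iff)
  qed
  show "\<And>g g'. g \<in> ?L \<Longrightarrow> g' \<in> ?L \<Longrightarrow> wn (g +++ g') = wn g \<otimes>\<^bsub>integer_group\<^esub> wn g'"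
    using J by (simp add: integer_group_def)
  obtain c where c: "c \<in> ?L" "winding_number c 0 = 1" using circle_loop[OF y0] by blast
  have wc: "wn c = 1" using wn_eq[OF c(1)] c(2) by (metis of_int_1 of_int_eq_iff)
  have rc: "reversepath c \<in> ?L" "wn (reversepath c) = -1"
  proof -
    show rl: "reversepath c \<in> ?L" using c(1) unfolding LE_def by auto
    have "winding_number (reversepath c) 0 = -1"
      using c unfolding LE_def by (simp add: winding_number_reversepath)
    thus "wn (reversepath c) = -1" using wn_eq[OF rl] by (metis of_int_1 of_int_minus of_int_eq_iff)
  qed
  have k0: "linepath y0 y0 \<in> ?L" "wn (linepath y0 y0) = 0"
  proof -
    show l: "linepath y0 y0 \<in> ?L" using y0 unfolding LE_def by auto
    show "wn (linepath y0 y0) = 0" using wn_eq[OF l] y0 by simp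
  qed
  have pos: "\<exists>g\<in>?L. wn g = int n \<and> (\<exists>g'\<in>?L. wn g' = - int n)" for n
  proof (induction n)
    case 0 thus ?case using k0 by force
  next
    case (Suc n)
    then obtain g g' where "g \<in> ?L" "wn g = int n" "g' \<in> ?L" "wn g' = - int n" by blast
    hence "g +++ c \<in> ?L \<and> wn (g +++ c) = int (Suc n)" "g' +++ reversepath c \<in> ?L \<and> wn (g' +++ reversepath c) = - int (Suc n)"
      using J[OF \<open>g \<in> ?L\<close> c(1)] J[OF \<open>g' \<in> ?L\<close> rc(1)] wc rc(2) by auto
    thus ?case by blast
  qed
  show "carrier integer_group \<subseteq> wn ` ?L"
  proof
    fix k :: int
    show "k \<in> wn ` ?L"
    proof (cases "k \<ge> 0")
      case True
      then obtain n where "k = int n" by (metis nonneg_eq_int)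
      thus ?thesis using pos[of n] by force
    next
      case False
      hence "k = - int (nat (-k))" by simp
      then obtain n where "k = - int n" by blast
      thus ?thesis using pos[of n] by force
    qed
  qed
qed


lemma crit_Z2:
  fixes p :: "'a::real_normed_vector \<Rightarrow> 'b::real_normed_vector" and \<sigma> :: "'a \<Rightarrow> 'a"
  assumes cov: "covering_space T p S" and sc: "simply_connected T"
    and contsig: "continuous_on T \<sigma>" and sigT: "\<sigma> ` T \<subseteq> T" and signe: "\<And>x. x \<in> T \<Longrightarrow> \<sigma> x \<noteq> x"
    and psig: "\<And>x. x \<in> T \<Longrightarrow> p (\<sigma> x) = p x"
    and fib: "\<And>x y. x \<in> T \<Longrightarrow> y \<in> T \<Longrightarrow> p x = p y \<Longrightarrow> y = x \<or> y = \<sigma> x"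
    and y0: "y0 \<in> S"
  shows "\<exists>\<kappa>. crit S y0 \<kappa> (integer_mod_group 2)"
proof -
  have contp: "continuous_on T p" and pT: "p ` T = S"
    using cov by (auto simp: covering_space_def)
  obtain e0 where e0: "e0 \<in> T" "p e0 = y0" using y0 pT by auto
  let ?L = "LE S y0"
  define lifts where "lifts g = {\<beta>. path \<beta> \<and> path_image \<beta> \<subseteq> T \<and> pathstart \<beta> = e0 \<and> (\<forall>t\<in>{0..1}. p (\<beta> t) = g t)}" for g
  define \<kappa> where "\<kappa> g = (if pathfinish (SOME \<beta>. \<beta> \<in> lifts g) = e0 then 0 else 1::int)" for g
  have ex: "\<exists>\<beta>. \<beta> \<in> lifts g" if g: "g \<in> ?L" for g
  proof -
    have "path g" "path_image g \<subseteq> S" "pathstart g = p e0" using g e0 by (auto simp: LE_def)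
    from covering_space_lift_path_strong[OF cov e0(1) this] obtain \<beta> where
      "path \<beta>" "path_image \<beta> \<subseteq> T" "pathstart \<beta> = e0" "\<And>t. t \<in> {0..1} \<Longrightarrow> p (\<beta> t) = g t" by blast
    thus ?thesis unfolding lifts_def by blast
  qed
  have mono: "pathfinish \<beta> = pathfinish \<beta>'"
    if g: "g \<in> ?L" and g': "g' \<in> ?L" and h: "homotopic_paths S g g'"
      and b: "\<beta> \<in> lifts g" and b': "\<beta>' \<in> lifts g'" for g g' \<beta> \<beta>'
    using g g' b b' unfolding LE_def lifts_def
    by (intro covering_space_monodromy[OF cov _ _ _ _ h]) auto
  have K: "\<kappa> g = (if pathfinish \<beta> = e0 then 0 else 1)" if g: "g \<in> ?L" and b: "\<beta> \<in> lifts g" for g \<beta>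
  proof -
    have "(SOME \<beta>. \<beta> \<in> lifts g) \<in> lifts g" using b by (rule someI[where P="\<lambda>\<beta>. \<beta> \<in> lifts g"])
    moreover have "homotopic_paths S g g" using g by (auto simp: LE_def)
    ultimately have "pathfinish (SOME \<beta>. \<beta> \<in> lifts g) = pathfinish \<beta>" using mono[OF g g _ _ b] by blast
    thus ?thesis by (simp add: \<kappa>_def)
  qed
  have fin: "pathfinish \<beta> = e0 \<or> pathfinish \<beta> = \<sigma> e0" if g: "g \<in> ?L" and b: "\<beta> \<in> lifts g" for g \<beta>
  proof -
    have "pathfinish \<beta> \<in> T" using b unfolding lifts_def by (auto simp: pathfinish_in_path_image subset_iff)
    moreover have "p (pathfinish \<beta>) = p e0" using g b e0 unfolding lifts_def LE_def pathfinish_def by auto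
    ultimately show ?thesis using fib[OF e0(1)] by metis
  qed
  have s0: "\<sigma> e0 \<noteq> e0" using signe e0 by blast
  have ss: "\<sigma> (\<sigma> e0) = e0"
  proof -
    have "\<sigma> e0 \<in> T" "\<sigma> (\<sigma> e0) \<in> T" using sigT e0 by auto
    moreover have "p (\<sigma> (\<sigma> e0)) = p e0" using psig e0 sigT by auto
    ultimately have "\<sigma> (\<sigma> e0) = e0 \<or> \<sigma> (\<sigma> e0) = \<sigma> e0" using fib[OF e0(1)] by metis
    thus ?thesis using signe \<open>\<sigma> e0 \<in> T\<close> by metis
  qed
  have "crit S y0 \<kappa> (integer_mod_group 2)"
    unfolding crit_def
  proof (intro conjI ballI)
    show "\<And>g. g \<in> ?L \<Longrightarrow> \<kappa> g \<in> carrier (integer_mod_group 2)"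
      by (simp add: \<kappa>_def carrier_integer_mod_group)
    show "(\<kappa> g = \<kappa> g') = homotopic_paths S g g'" if g: "g \<in> ?L" and g': "g' \<in> ?L" for g g'
    proof -
      obtain \<beta> \<beta>' where b: "\<beta> \<in> lifts g" and b': "\<beta>' \<in> lifts g'" using ex g g' by blast
      have "\<kappa> g = \<kappa> g' \<longleftrightarrow> pathfinish \<beta> = pathfinish \<beta>'"
        using K[OF g b] K[OF g' b'] fin[OF g b] fin[OF g' b'] s0 by auto
      also have "\<dots> \<longleftrightarrow> homotopic_paths S g g'"
      proof
        assume eq: "pathfinish \<beta> = pathfinish \<beta>'"
        have "homotopic_paths T \<beta> \<beta>'"
          using sc b b' eq unfolding simply_connected_eq_homotopic_paths lifts_def by auto
        hence h1: "homotopic_paths S (p \<circ> \<beta>) (p \<circ> \<beta>')"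
          using contp pT by (intro homotopic_paths_continuous_image) auto
        have pb: "path (p \<circ> \<beta>)" "path_image (p \<circ> \<beta>) \<subseteq> S"
          using h1 homotopic_paths_imp_path homotopic_paths_imp_subset by blast+
        have pb': "path (p \<circ> \<beta>')" "path_image (p \<circ> \<beta>') \<subseteq> S"
          using h1 homotopic_paths_imp_path homotopic_paths_imp_subset by blast+
        have "homotopic_paths S g (p \<circ> \<beta>)"
          using b g unfolding lifts_def LE_def by (intro homotopic_paths_eq) auto
        moreover have "homotopic_paths S (p \<circ> \<beta>') g'"
          by (rule homotopic_paths_eq[OF pb']) (use b' in \<open>auto simp: lifts_def\<close>)
        ultimately show "homotopic_paths S g g'" using h1 homotopic_paths_trans by blast
      next
        assume "homotopic_paths S g g'"
        thus "pathfinish \<beta> = pathfinish \<beta>'" using mono[OF g g' _ b b'] by blast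
      qed
      finally show ?thesis .
    qed
    show "\<kappa> (g +++ g') = \<kappa> g \<otimes>\<^bsub>integer_mod_group 2\<^esub> \<kappa> g'" if g: "g \<in> ?L" and g': "g' \<in> ?L" for g g'
    proof -
      obtain \<beta> \<beta>' where b: "\<beta> \<in> lifts g" and b': "\<beta>' \<in> lifts g'" using ex g g' by blast
      define \<beta>'' where "\<beta>'' = (if pathfinish \<beta> = e0 then \<beta>' else \<sigma> \<circ> \<beta>')"
      have b'': "path \<beta>''" "path_image \<beta>'' \<subseteq> T" "pathstart \<beta>'' = pathfinish \<beta>"
         "\<And>t. t \<in> {0..1} \<Longrightarrow> p (\<beta>'' t) = g' t"
         "pathfinish \<beta>'' = (if pathfinish \<beta> = e0 then pathfinish \<beta>' else \<sigma> (pathfinish \<beta>'))"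
      proof -
        have pT': "\<And>t. t \<in> {0..1} \<Longrightarrow> \<beta>' t \<in> T" using b' unfolding lifts_def path_image_def by auto
        show "path \<beta>''"
        proof (cases "pathfinish \<beta> = e0")
          case False
          have "path (\<sigma> \<circ> \<beta>')" using b' contsig unfolding lifts_def
            by (intro path_continuous_image) (auto intro: continuous_on_subset)
          thus ?thesis using False by (simp add: \<beta>''_def)
        qed (use b' in \<open>auto simp: \<beta>''_def lifts_def\<close>)
        show "path_image \<beta>'' \<subseteq> T" using b' sigT unfolding lifts_def \<beta>''_def path_image_def by auto
        show "pathstart \<beta>'' = pathfinish \<beta>" using fin[OF g b] b' unfolding \<beta>''_def lifts_def
          by (auto simp: pathstart_def)
        show "\<And>t. t \<in> {0..1} \<Longrightarrow> p (\<beta>'' t) = g' t" using b' pT' psig unfolding \<beta>''_def lifts_def by auto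
        show "pathfinish \<beta>'' = (if pathfinish \<beta> = e0 then pathfinish \<beta>' else \<sigma> (pathfinish \<beta>'))"
          by (simp add: \<beta>''_def pathfinish_def)
      qed
      have gj: "g +++ g' \<in> ?L" using g g' unfolding LE_def by (auto simp: path_image_join)
      have bj: "\<beta> +++ \<beta>'' \<in> lifts (g +++ g')"
        unfolding lifts_def
      proof (intro CollectI conjI ballI)
        show "path (\<beta> +++ \<beta>'')" using b b'' unfolding lifts_def by auto
        show "path_image (\<beta> +++ \<beta>'') \<subseteq> T" using b b'' unfolding lifts_def
          by (metis (no_types, lifting) mem_Collect_eq path_image_join subset_path_image_join)
        show "pathstart (\<beta> +++ \<beta>'') = e0" using b unfolding lifts_def by simp
        fix t :: real assume t: "t \<in> {0..1}"
        show "p ((\<beta> +++ \<beta>'') t) = (g +++ g') t"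
          using b b''(4) t unfolding lifts_def joinpaths_def by auto
      qed
      have "\<kappa> (g +++ g') = (if pathfinish \<beta>'' = e0 then 0 else 1)" using K[OF gj bj] by simp
      also have "\<dots> = (\<kappa> g + \<kappa> g') mod 2"
        using K[OF g b] K[OF g' b'] fin[OF g b] fin[OF g' b'] b''(5) s0 ss by auto
      finally show ?thesis by (simp add: integer_mod_group_def)
    qed
    show "carrier (integer_mod_group 2) \<subseteq> \<kappa> ` ?L"
    proof
      fix k assume "k \<in> carrier (integer_mod_group 2)"
      hence k: "k = 0 \<or> k = 1" by (auto simp: carrier_integer_mod_group)
      have c0: "linepath y0 y0 \<in> ?L" using y0 by (auto simp: LE_def)
      have "linepath e0 e0 \<in> lifts (linepath y0 y0)" using e0 by (auto simp: lifts_def)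
      hence "\<kappa> (linepath y0 y0) = 0" using K[OF c0] by simp
      moreover obtain q where q: "path q" "path_image q \<subseteq> T" "pathstart q = e0" "pathfinish q = \<sigma> e0"
        using sc e0 sigT simply_connected_imp_path_connected unfolding path_connected_def by blast
      have c1: "p \<circ> q \<in> ?L"
        unfolding LE_def using q contp pT e0 psig
        by (auto intro!: path_continuous_image continuous_on_subset[OF contp] simp: path_image_compose pathstart_compose pathfinish_compose)
      have "q \<in> lifts (p \<circ> q)" using q by (auto simp: lifts_def)
      hence "\<kappa> (p \<circ> q) = 1" using K[OF c1] q s0 by simp
      ultimately show "k \<in> \<kappa> ` ?L" using k c0 c1 by force
    qed
  qed
  thus ?thesis by blast
qed


lemma gauge_equiv_iff:
  "gauge_equiv par b b' \<longleftrightarrow> (\<exists>c \<epsilon>. cmod c = 1 \<and> (\<epsilon> = 1 \<or> \<epsilon> = -1) \<and> (\<forall>i. b' $ i = c * (if par i then \<epsilon> else 1) * b $ i))"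
proof
  assume "gauge_equiv par b b'"
  then obtain \<beta> \<eta> where "\<eta> \<in> {1, -1::complex}" "\<forall>i. b' $ i = exp (\<i> * of_real \<beta>) * (if par i then \<eta> else 1) * b $ i"
    unfolding gauge_equiv_def by blast
  thus "\<exists>c \<epsilon>. cmod c = 1 \<and> (\<epsilon> = 1 \<or> \<epsilon> = -1) \<and> (\<forall>i. b' $ i = c * (if par i then \<epsilon> else 1) * b $ i)"
    by (intro exI[where x="exp (\<i> * of_real \<beta>)"] exI[where x=\<eta>]) auto
next
  assume "\<exists>c \<epsilon>. cmod c = 1 \<and> (\<epsilon> = 1 \<or> \<epsilon> = -1) \<and> (\<forall>i. b' $ i = c * (if par i then \<epsilon> else 1) * b $ i)"
  then obtain c \<epsilon> where c: "cmod c = 1" "\<epsilon> = 1 \<or> \<epsilon> = -1" "\<forall>i. b' $ i = c * (if par i then \<epsilon> else 1) * b $ i"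
    by blast
  have "c \<noteq> 0" using c by auto
  hence "c = exp (\<i> * of_real (Arg c))" using Arg_eq[of c] c(1) by simp
  thus "gauge_equiv par b b'" unfolding gauge_equiv_def using c
    by (intro exI[where x="Arg c"] bexI[where x=\<epsilon>]) auto
qed


lemma nf1_sum: fixes F :: "'n::finite \<Rightarrow> 'a::comm_monoid_add"
  assumes eo: "\<And>i. i = e \<or> i = od" "e \<noteq> od" shows "(\<Sum>i\<in>UNIV. F i) = F e + F od"
proof -
  have U: "UNIV = {e, od}" using eo by auto
  have "(\<Sum>i\<in>UNIV. F i) = (\<Sum>i\<in>{e,od}. F i)" by (rule sum.cong) (use U in auto)
  thus ?thesis using eo by simp
qed

lemma nf1_Mt:
  fixes par :: "'n::finite \<Rightarrow> bool"
  assumes eo: "\<And>i. i = e \<or> i = od" "e \<noteq> od" "\<not> par e" "par od"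
  shows "b \<in> Mtilde par \<longleftrightarrow> (cmod (b$e))\<^sup>2 + (cmod (b$od))\<^sup>2 = 1 \<and> b$e \<noteq> 0 \<and> b$od \<noteq> 0"
proof -
  have a: "(\<exists>i. \<not> par i \<and> b $ i \<noteq> 0) \<longleftrightarrow> b$e \<noteq> 0" using eo by metis
  have c: "(\<exists>i. par i \<and> b $ i \<noteq> 0) \<longleftrightarrow> b$od \<noteq> 0" using eo by metis
  have s: "(\<Sum>i\<in>UNIV. (cmod (b$i))\<^sup>2) = (cmod (b$e))\<^sup>2 + (cmod (b$od))\<^sup>2" by (rule nf1_sum[OF eo(1,2)])
  show ?thesis unfolding Mtilde_def mem_Collect_eq a c s ..
qed
definition f1 :: "'n \<Rightarrow> 'n \<Rightarrow> complex^'n \<Rightarrow> complex" where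
  "f1 e od b = (b$od / b$e)\<^sup>2"

lemma nf1_main:
  fixes par :: "'n::finite \<Rightarrow> bool"
  assumes eo: "\<And>i. i = e \<or> i = od" "e \<noteq> od" "\<not> par e" "par od"
    and x0: "x0 \<in> topspace (Mspace par)"
  shows "fundamental_group (Mspace par) x0 \<cong> integer_group"
  unfolding Mspace_def
proof (rule main_reduction[where f="f1 e od" and S="- {0}"])
  let ?M = "Mtilde par"
  note Mt = nf1_Mt[OF eo]
  show "x0 \<in> topspace (quotient_topology (top_of_set ?M) (gauge_equiv par))" using x0 by (simp add: Mspace_def)
  show "\<exists>\<kappa>. crit (- {0}) y0 \<kappa> integer_group" if "y0 \<in> - {0}" for y0 :: complex
  proof -
    have "crit (- {0}) y0 wn integer_group" using that by (intro crit_Z) simp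
    thus ?thesis by (rule exI[where x=wn])
  qed
  show "continuous_on ?M (f1 e od)" unfolding f1_def
    by (intro continuous_intros) (auto simp: Mt)
  show "- {0} = f1 e od ` ?M"
  proof
    show "f1 e od ` ?M \<subseteq> - {0}" by (auto simp: f1_def Mt)
    show "- {0} \<subseteq> f1 e od ` ?M"
    proof
      fix z :: complex assume z: "z \<in> - {0}"
      define w where "w = csqrt z"
      define n where "n = sqrt (1 + (cmod w)\<^sup>2)"
      have n: "n > 0" "n\<^sup>2 = 1 + (cmod w)\<^sup>2" by (auto simp: n_def add_pos_nonneg)
      define b :: "complex^'n" where "b = (\<chi> i. if par i then w / of_real n else 1 / of_real n)"
      have w0: "w \<noteq> 0" using z by (auto simp: w_def)
      have be: "b$e = 1 / of_real n" "b$od = w / of_real n" using eo by (auto simp: b_def)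
      have "(cmod (b$e))\<^sup>2 + (cmod (b$od))\<^sup>2 = (1 + (cmod w)\<^sup>2) / n\<^sup>2"
        using n(1) by (simp add: be norm_divide power_divide add_divide_distrib)
      moreover have "1 + (cmod w)\<^sup>2 \<noteq> 0" using n(1) n(2)[symmetric] by simp
      ultimately have "b \<in> ?M" unfolding Mt using n w0 be by simp
      moreover have "f1 e od b = z" using n(1) by (simp add: f1_def be w_def)

      ultimately show "z \<in> f1 e od ` ?M" by force
    qed
  qed
  show "gauge_equiv par x y = (f1 e od x = f1 e od y)" if x: "x \<in> ?M" and y: "y \<in> ?M" for x y
  proof
    assume "gauge_equiv par x y"
    then obtain c \<epsilon> where c: "cmod c = 1" "\<epsilon> = 1 \<or> \<epsilon> = -1" "\<forall>i. y $ i = c * (if par i then \<epsilon> else 1) * x $ i"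
      unfolding gauge_equiv_iff by blast
    have "c \<noteq> 0" using c by auto
    thus "f1 e od x = f1 e od y" using c eo unfolding f1_def by (auto simp: power2_eq_square field_simps)
  next
    assume eq: "f1 e od x = f1 e od y"
    have xs: "(cmod (x$e))\<^sup>2 + (cmod (x$od))\<^sup>2 = 1" "x$e \<noteq> 0" "x$od \<noteq> 0" using x Mt by auto
    have ys: "(cmod (y$e))\<^sup>2 + (cmod (y$od))\<^sup>2 = 1" "y$e \<noteq> 0" "y$od \<noteq> 0" using y Mt by auto
    define wx where "wx = x$od / x$e"
    define wy where "wy = y$od / y$e"
    have "wy\<^sup>2 = wx\<^sup>2" using eq by (simp add: f1_def wx_def wy_def)
    then obtain \<epsilon> where \<epsilon>: "\<epsilon> = 1 \<or> \<epsilon> = (-1::complex)" "wy = \<epsilon> * wx"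
      by (metis mult_1 mult_minus1 power2_eq_iff)
    have ce: "cmod \<epsilon> = 1" using \<epsilon> by auto
    have xo: "x$od = wx * x$e" and yo: "y$od = wy * y$e" using xs ys by (auto simp: wx_def wy_def)
    have "(cmod (x$e))\<^sup>2 * (1 + (cmod wx)\<^sup>2) = 1" using xs(1) xo by (simp add: norm_mult power_mult_distrib algebra_simps)
    moreover have "(cmod (y$e))\<^sup>2 * (1 + (cmod wx)\<^sup>2) = 1" using ys(1) yo \<epsilon>(2) ce
      by (simp add: norm_mult power_mult_distrib algebra_simps)
    moreover have "1 + (cmod wx)\<^sup>2 \<noteq> 0" by (smt (verit) zero_le_power2)
    ultimately have "(cmod (y$e))\<^sup>2 = (cmod (x$e))\<^sup>2"
      by (metis mult_right_cancel)
    hence ne: "cmod (y$e) = cmod (x$e)" by (simp add: power2_eq_iff_nonneg)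
    define c where "c = y$e / x$e"
    have c1: "cmod c = 1" using ne xs(2) by (simp add: c_def norm_divide)
    have "\<forall>i. y $ i = c * (if par i then \<epsilon> else 1) * x $ i"
    proof
      fix i
      have "i = e \<or> i = od" by (rule eo(1))
      thus "y $ i = c * (if par i then \<epsilon> else 1) * x $ i"
        using eo xs(2) xo yo \<epsilon>(2) by (elim disjE) (auto simp: c_def field_simps)
    qed
    thus "gauge_equiv par x y" unfolding gauge_equiv_iff using c1 \<epsilon>(1) by blast
  qed
  show "\<exists>W s. openin (top_of_set (- {0})) W \<and> f1 e od b \<in> W \<and> continuous_on W s \<and>
          s ` W \<subseteq> ?M \<and> (\<forall>y\<in>W. f1 e od (s y) = y) \<and> s (f1 e od b) = b" if b: "b \<in> ?M" for b
  proof -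
    have bs: "(cmod (b$e))\<^sup>2 + (cmod (b$od))\<^sup>2 = 1" "b$e \<noteq> 0" "b$od \<noteq> 0" using b Mt by auto
    define w0 where "w0 = b$od / b$e"
    define z0 where "z0 = w0\<^sup>2"
    have w0: "w0 \<noteq> 0" "z0 \<noteq> 0" using bs by (auto simp: w0_def z0_def)
    have bo: "b$od = w0 * b$e" using bs by (simp add: w0_def)
    define r where "r z = w0 * csqrt (z / z0)" for z
    define n where "n z = sqrt (1 + (cmod (r z))\<^sup>2)" for z
    define c where "c = b$e * of_real (sqrt (1 + (cmod w0)\<^sup>2))"
    define s where "s z = (\<chi> i. if par i then c * r z / of_real (n z) else c / of_real (n z))" for z
    define W where "W = - {0} \<inter> (\<lambda>z. z / z0) -` (- \<real>\<^sub>\<le>\<^sub>0)"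
    have n: "n z > 0" "(n z)\<^sup>2 = 1 + (cmod (r z))\<^sup>2" for z
    proof -
      have "0 < 1 + (cmod (r z))\<^sup>2" by (smt (verit) zero_le_power2)
      thus "n z > 0" "(n z)\<^sup>2 = 1 + (cmod (r z))\<^sup>2" by (auto simp: n_def)
    qed
    have cc: "(cmod c)\<^sup>2 = 1"
    proof -
      have "(cmod c)\<^sup>2 = (cmod (b$e))\<^sup>2 * (1 + (cmod w0)\<^sup>2)" by (simp add: c_def norm_mult power_mult_distrib)
      also have "\<dots> = (cmod (b$e))\<^sup>2 + (cmod (b$od))\<^sup>2" using bo by (simp add: norm_mult power_mult_distrib algebra_simps)
      finally show ?thesis using bs by simp
    qed
    have c0: "c \<noteq> 0" using cc by auto
    have oW: "openin (top_of_set (- {0})) W" unfolding W_def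
      by (intro openin_open_Int continuous_open_vimage) (use w0 in \<open>auto intro!: continuous_intros\<close>)
    have fb: "f1 e od b = z0" by (simp add: f1_def w0_def z0_def)
    have z0W: "z0 \<in> W" using w0 by (simp add: W_def)
    have rz0: "r z0 = w0" using w0 by (simp add: r_def)
    have rz: "r z \<noteq> 0" "(r z)\<^sup>2 = z * z0 / z0" if "z \<in> W" for z
      using that w0 by (auto simp: r_def W_def power_mult_distrib z0_def)
    show ?thesis
    proof (intro exI conjI)
      show "openin (top_of_set (- {0})) W" by (rule oW)
      show "f1 e od b \<in> W" using fb z0W by simp
      have cs: "continuous_on W (\<lambda>z. csqrt (z / z0))"
      proof (rule continuous_at_imp_continuous_on, intro ballI)
        fix z assume "z \<in> W"
        hence "z / z0 \<notin> \<real>\<^sub>\<le>\<^sub>0" by (simp add: W_def)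
        thus "isCont (\<lambda>z. csqrt (z / z0)) z"
          by (intro continuous_intros isCont_o2[where f="\<lambda>z. z/z0" and g=csqrt] continuous_at_csqrt) auto
      qed
      have cr: "continuous_on W r" unfolding r_def by (intro continuous_intros cs)
      have cn: "continuous_on W (\<lambda>z. complex_of_real (n z))" unfolding n_def by (intro continuous_intros cr)
      have nz: "complex_of_real (n z) \<noteq> 0" "n z \<noteq> 0" for z using n(1)[of z] by auto
      show "continuous_on W s" unfolding s_def
      proof (intro continuous_on_vec_lambda)
        fix i
        show "continuous_on W (\<lambda>z. if par i then c * r z / of_real (n z) else c / of_real (n z))"
          by (cases "par i") (auto intro!: continuous_intros cr cn simp: nz)
      qed
      show "s ` W \<subseteq> ?M"
      proof
        fix y assume "y \<in> s ` W"
        then obtain z where z: "z \<in> W" "y = s z" by auto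
        have "(cmod (c / of_real (n z)))\<^sup>2 + (cmod (c * r z / of_real (n z)))\<^sup>2 = 1"
        proof -
          have nn: "1 + (cmod (r z))\<^sup>2 \<noteq> 0" using n[of z] by (metis less_irrefl power_not_zero)
          have "(cmod (c / of_real (n z)))\<^sup>2 + (cmod (c * r z / of_real (n z)))\<^sup>2
               = (cmod c)\<^sup>2 / (n z)\<^sup>2 + (cmod c)\<^sup>2 * (cmod (r z))\<^sup>2 / (n z)\<^sup>2"
            using n[of z] by (simp add: norm_divide norm_mult power_divide power_mult_distrib)
          also have "\<dots> = (1 + (cmod (r z))\<^sup>2) / (n z)\<^sup>2" using cc by (simp add: add_divide_distrib)
          also have "\<dots> = 1" using n(2)[of z] nn by simp
          finally show ?thesis .
        qed
        thus "y \<in> ?M" unfolding Mt using z eo c0 rz[OF z(1)] n[of z] by (simp add: s_def)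
      qed
      show "\<forall>y\<in>W. f1 e od (s y) = y"
      proof
        fix z assume z: "z \<in> W"
        have "f1 e od (s z) = (r z)\<^sup>2" using eo c0 n[of z] by (simp add: f1_def s_def)
        thus "f1 e od (s z) = z" using rz[OF z] w0 by simp
      qed
      show "s (f1 e od b) = b"
      proof -
        have nz: "n z0 = sqrt (1 + (cmod w0)\<^sup>2)" by (simp add: n_def rz0)
        have pos: "sqrt (1 + (cmod w0)\<^sup>2) \<noteq> 0" by (smt (verit) real_sqrt_eq_zero_cancel_iff zero_le_power2)
        have "s z0 $ i = b $ i" for i
        proof -
          have "i = e \<or> i = od" by (rule eo(1))
          thus ?thesis using eo pos bo by (elim disjE) (auto simp: s_def nz rz0 c_def)
        qed
        thus ?thesis using fb by (simp add: vec_eq_iff)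
      qed
    qed
  qed
qed


definition hh :: "complex^('n::finite) \<Rightarrow> complex^('n\<times>'n)" where
  "hh b = (\<chi> a. b$(fst a) * cnj (b$(snd a)))"
definition sgn2 :: "('n::finite \<Rightarrow> bool) \<Rightarrow> 'n \<times> 'n \<Rightarrow> complex" where
  "sgn2 par a = (if par (fst a) = par (snd a) then 1 else -1)"
definition sg :: "('n::finite \<Rightarrow> bool) \<Rightarrow> complex^('n\<times>'n) \<Rightarrow> complex^('n\<times>'n)" where
  "sg par P = (\<chi> a. sgn2 par a * P$a)"
definition Dp :: "('n::finite \<Rightarrow> bool) \<Rightarrow> complex^('n\<times>'n) \<Rightarrow> complex^('n\<times>'n)" where
  "Dp par P = (\<chi> a. if par (fst a) = par (snd a) then P$a else 0)"
definition Op :: "('n::finite \<Rightarrow> bool) \<Rightarrow> complex^('n\<times>'n) \<Rightarrow> complex^('n\<times>'n)" where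
  "Op par P = (\<chi> a. if par (fst a) = par (snd a) then 0 else P$a)"
definition pp :: "('n::finite \<Rightarrow> bool) \<Rightarrow> complex^('n\<times>'n) \<Rightarrow> (complex^('n\<times>'n)) \<times> (complex^(('n\<times>'n)\<times>('n\<times>'n)))" where
  "pp par P = (Dp par P, (\<chi> ac. (Op par P)$(fst ac) * (Op par P)$(snd ac)))"
definition tw :: "('n::finite \<Rightarrow> bool) \<Rightarrow> complex^'n \<Rightarrow> complex^'n" where
  "tw par b = (\<chi> i. (if par i then -1 else 1) * b$i)"
definition sc :: "complex \<Rightarrow> complex^('n::finite) \<Rightarrow> complex^'n" where
  "sc c b = (\<chi> i. c * b$i)"

lemma hh_nth: "hh b $ (i,j) = b$i * cnj (b$j)" by (simp add: hh_def)

lemma sg_hh: "sg par (hh b) = hh (tw par b)"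
  by (simp add: vec_eq_iff sg_def hh_def tw_def sgn2_def)

lemma pp_sg: "pp par (sg par P) = pp par P"
  by (simp add: pp_def vec_eq_iff Dp_def Op_def sg_def sgn2_def)

lemma Dp_Op: "P = Dp par P + Op par P" "sg par P = Dp par P - Op par P"
  by (simp_all add: vec_eq_iff Dp_def Op_def sg_def sgn2_def)

lemma Op_sg: "Op par (sg par P) = - Op par P"
  by (simp add: vec_eq_iff Op_def sg_def sgn2_def)

lemma sg_sg: "sg par (sg par P) = P"
  by (simp add: vec_eq_iff sg_def sgn2_def)

lemma Mt_nz: "b \<in> Mtilde par \<Longrightarrow> \<exists>i. \<not> par i \<and> b$i \<noteq> 0" "b \<in> Mtilde par \<Longrightarrow> \<exists>i. par i \<and> b$i \<noteq> 0"
  by (auto simp: Mtilde_def)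

lemma Op_hh_nz: assumes "b \<in> Mtilde par" shows "\<exists>a. Op par (hh b) $ a \<noteq> 0"
proof -
  obtain i j where "\<not> par i" "b$i \<noteq> 0" "par j" "b$j \<noteq> 0" using Mt_nz[OF assms] by blast
  hence "Op par (hh b) $ (i,j) \<noteq> 0" by (simp add: Op_def hh_def)
  thus ?thesis by blast
qed

lemma cmod_pm1: "cmod (if P then -1 else 1 :: complex) = 1" by simp

lemma tw_Mt: "b \<in> Mtilde par \<Longrightarrow> tw par b \<in> Mtilde par"
  by (auto simp: Mtilde_def tw_def norm_mult cmod_pm1 simp del: norm_minus_cancel)

lemma sc_Mt: "cmod c = 1 \<Longrightarrow> b \<in> Mtilde par \<Longrightarrow> sc c b \<in> Mtilde par"
  by (auto simp: Mtilde_def sc_def norm_mult)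

lemma hh_sc: "cmod c = 1 \<Longrightarrow> hh (sc c b) = hh b"
proof -
  assume c: "cmod c = 1"
  have "c * cnj c = 1" using c by (metis complex_norm_square mult.commute of_real_1 power_one)
  thus ?thesis by (simp add: vec_eq_iff hh_def sc_def algebra_simps)
qed

lemma hh_fiber:
  assumes "hh b = hh b'" "b \<noteq> 0"
  shows "\<exists>c. cmod c = 1 \<and> b' = sc c b"
proof -
  obtain k where k: "b$k \<noteq> 0" using assms(2) by (metis vec_eq_iff zero_index)
  have kk: "b'$k * cnj (b'$k) = b$k * cnj (b$k)" using assms(1) hh_nth[of b k k] hh_nth[of b' k k] by simp
  hence "(cmod (b'$k))\<^sup>2 = (cmod (b$k))\<^sup>2" by (metis complex_norm_square of_real_eq_iff)
  hence nk: "cmod (b'$k) = cmod (b$k)" by (simp add: power2_eq_iff_nonneg)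
  hence k': "b'$k \<noteq> 0" using k by auto
  define c where "c = cnj (b$k) / cnj (b'$k)"
  have c: "cmod c = 1" using nk k by (simp add: c_def norm_divide)
  have "b'$i = c * b$i" for i
  proof -
    have "b'$i * cnj (b'$k) = b$i * cnj (b$k)" using assms(1) hh_nth[of b i k] hh_nth[of b' i k] by simp
    thus ?thesis using k' by (simp add: c_def field_simps)
  qed
  thus ?thesis using c by (auto simp: sc_def vec_eq_iff)
qed

lemma Mt_ne0: "b \<in> Mtilde par \<Longrightarrow> b \<noteq> 0"
  using Mt_nz(1)[of b par] by auto

lemma pp_fiber:
  assumes b: "b \<in> Mtilde par" and eq: "pp par Q = pp par (hh b)"
  shows "Q = hh b \<or> Q = sg par (hh b)"
proof -
  let ?P = "hh b"
  obtain a0 where a0: "Op par ?P $ a0 \<noteq> 0" using Op_hh_nz[OF b] by blast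
  have D: "Dp par Q = Dp par ?P" and O: "\<And>a c. Op par Q $ a * Op par Q $ c = Op par ?P $ a * Op par ?P $ c"
    using eq by (auto simp: pp_def vec_eq_iff)
  have "(Op par Q $ a0)\<^sup>2 = (Op par ?P $ a0)\<^sup>2" using O[of a0 a0] by (simp add: power2_eq_square)
  then obtain \<epsilon> where \<epsilon>: "\<epsilon> = 1 \<or> \<epsilon> = (-1::complex)" "Op par Q $ a0 = \<epsilon> * Op par ?P $ a0"
    by (metis mult_1 mult_minus1 power2_eq_iff)
  have e2: "\<epsilon> * \<epsilon> = 1" using \<epsilon>(1) by auto
  have Oa: "Op par Q $ a = \<epsilon> * Op par ?P $ a" for a
  proof -
    have "Op par Q $ a * (\<epsilon> * Op par ?P $ a0) = Op par ?P $ a * Op par ?P $ a0" using O[of a a0] \<epsilon>(2) by simp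
    hence "(Op par Q $ a * \<epsilon> - Op par ?P $ a) * Op par ?P $ a0 = 0" by (simp add: algebra_simps)
    hence "Op par Q $ a * \<epsilon> = Op par ?P $ a" using a0 by simp
    hence "Op par Q $ a * (\<epsilon> * \<epsilon>) = Op par ?P $ a * \<epsilon>" by (simp add: mult.assoc[symmetric])
    thus ?thesis using e2 by (simp add: mult.commute)
  qed
  show ?thesis
  proof (cases "\<epsilon> = 1")
    case True
    hence "Op par Q = Op par ?P" using Oa by (simp add: vec_eq_iff)
    hence "Q = ?P" using D by (metis Dp_Op(1))
    thus ?thesis by blast
  next
    case False
    hence "Op par Q = - Op par ?P" using Oa \<epsilon>(1) by (simp add: vec_eq_iff)
    hence "Q = sg par ?P" using D by (metis Dp_Op(1) Dp_Op(2) diff_conv_add_uminus)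
    thus ?thesis by blast
  qed
qed

lemma Req2:
  assumes b: "b \<in> Mtilde par" and b': "b' \<in> Mtilde par"
  shows "gauge_equiv par b b' \<longleftrightarrow> pp par (hh b) = pp par (hh b')"
proof
  assume "gauge_equiv par b b'"
  then obtain c \<epsilon> where c: "cmod c = 1" "\<epsilon> = 1 \<or> \<epsilon> = -1" "\<forall>i. b' $ i = c * (if par i then \<epsilon> else 1) * b $ i"
    unfolding gauge_equiv_iff by blast
  show "pp par (hh b) = pp par (hh b')"
  proof (cases "\<epsilon> = 1")
    case True
    hence "b' = sc c b" using c by (simp add: vec_eq_iff sc_def)
    thus ?thesis using hh_sc[OF c(1), of b] by metis
  next
    case False
    hence "b' = sc c (tw par b)" using c by (auto simp: vec_eq_iff sc_def tw_def)
    hence "hh b' = hh (tw par b)" using hh_sc[OF c(1), of "tw par b"] by simp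
    hence "hh b' = sg par (hh b)" by (simp add: sg_hh)
    thus ?thesis by (simp add: pp_sg)
  qed
next
  assume "pp par (hh b) = pp par (hh b')"
  hence "hh b' = hh b \<or> hh b' = hh (tw par b)" using pp_fiber[OF b] sg_hh by metis
  moreover have "b \<noteq> 0" "tw par b \<noteq> 0" using Mt_ne0 b tw_Mt by blast+
  ultimately obtain c where c: "cmod c = 1" "b' = sc c b \<or> b' = sc c (tw par b)"
    using hh_fiber by metis
  thus "gauge_equiv par b b'" unfolding gauge_equiv_iff
  proof (elim disjE)
    assume "b' = sc c b"
    thus "\<exists>c \<epsilon>. cmod c = 1 \<and> (\<epsilon> = 1 \<or> \<epsilon> = -1) \<and> (\<forall>i. b' $ i = c * (if par i then \<epsilon> else 1) * b $ i)"
      using c(1) by (intro exI[where x=c] exI[where x=1]) (auto simp: sc_def)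
  next
    assume "b' = sc c (tw par b)"
    thus "\<exists>c \<epsilon>. cmod c = 1 \<and> (\<epsilon> = 1 \<or> \<epsilon> = -1) \<and> (\<forall>i. b' $ i = c * (if par i then \<epsilon> else 1) * b $ i)"
      using c(1) by (intro exI[where x=c] exI[where x="-1"]) (auto simp: sc_def tw_def)
  qed
qed


lemma path_lift_gen:
  fixes h :: "'a::real_normed_vector \<Rightarrow> 'b::real_normed_vector" and \<gamma> :: "real \<Rightarrow> 'b"
  assumes cover: "\<And>P. P \<in> T \<Longrightarrow> \<exists>k. P \<in> W k"
    and Wo: "\<And>k. openin (top_of_set T) (W k)"
    and sec: "\<And>b k. b \<in> M \<Longrightarrow> h b \<in> W k \<Longrightarrow>
                 \<exists>s. continuous_on (W k) s \<and> s ` W k \<subseteq> M \<and> (\<forall>P\<in>W k. h (s P) = P) \<and> s (h b) = b"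
    and g: "path \<gamma>" "path_image \<gamma> \<subseteq> T" and b0: "b0 \<in> M" "h b0 = pathstart \<gamma>"
  shows "\<exists>\<beta>. path \<beta> \<and> path_image \<beta> \<subseteq> M \<and> pathstart \<beta> = b0 \<and> (\<forall>t\<in>{0..1}. h (\<beta> t) = \<gamma> t)"
proof -
  define Q where "Q t \<longleftrightarrow> (\<exists>\<beta>. continuous_on {0..t} \<beta> \<and> \<beta> ` {0..t} \<subseteq> M \<and> \<beta> 0 = b0 \<and> (\<forall>s\<in>{0..t}. h (\<beta> s) = \<gamma> s))" for t
  have cg: "continuous_on {0..1} \<gamma>" using g by (simp add: path_def)
  have gT: "\<gamma> t \<in> T" if "t \<in> {0..1}" for t using g that by (auto simp: path_image_def)
  have "Q 1"
  proof (rule connected_induction_simple[where S="{0..1::real}" and a=0 and b=1 and P=Q])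
    show "connected {0..1::real}" by simp
    show "(0::real) \<in> {0..1}" "(1::real) \<in> {0..1}" by auto
    show "Q 0" unfolding Q_def using b0 by (intro exI[where x="\<lambda>_. b0"]) (auto simp: pathstart_def)
    fix x :: real assume x: "x \<in> {0..1}"
    obtain k where k: "\<gamma> x \<in> W k" using cover gT[OF x] by blast
    have "openin (top_of_set {0..1}) ({0..1} \<inter> \<gamma> -` W k)"
      by (rule continuous_openin_preimage[OF cg _ Wo]) (use gT in auto)
    then obtain \<delta> where d: "\<delta> > 0" "\<And>t. t \<in> {0..1} \<Longrightarrow> dist t x < \<delta> \<Longrightarrow> \<gamma> t \<in> W k"
      using x k unfolding openin_euclidean_subtopology_iff by blast
    show "\<exists>U. openin (top_of_set {0..1}) U \<and> x \<in> U \<and> (\<forall>y\<in>U. \<forall>z\<in>U. Q y \<longrightarrow> Q z)"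
    proof (intro exI conjI ballI impI)
      show "openin (top_of_set {0..1}) ({0..1} \<inter> ball x \<delta>)" by (intro openin_open_Int) auto
      show "x \<in> {0..1} \<inter> ball x \<delta>" using x d by auto
      fix y z assume y: "y \<in> {0..1} \<inter> ball x \<delta>" and z: "z \<in> {0..1} \<inter> ball x \<delta>" and Qy: "Q y"
      then obtain \<beta> where \<beta>: "continuous_on {0..y} \<beta>" "\<beta> ` {0..y} \<subseteq> M" "\<beta> 0 = b0" "\<forall>s\<in>{0..y}. h (\<beta> s) = \<gamma> s"
        unfolding Q_def by blast
      show "Q z"
      proof (cases "z \<le> y")
        case True
        thus ?thesis unfolding Q_def using \<beta> by (intro exI[where x=\<beta>]) (auto intro: continuous_on_subset)
      next
        case False
        have y0: "0 \<le> y" using y by auto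
        have b1: "\<beta> y \<in> M" using \<beta>(2) y0 by auto
        have hb1: "h (\<beta> y) \<in> W k" using \<beta>(4) y0 d(2)[of y] y by (auto simp: dist_commute)
        obtain s where s: "continuous_on (W k) s" "s ` W k \<subseteq> M" "\<forall>P\<in>W k. h (s P) = P" "s (h (\<beta> y)) = \<beta> y"
          using sec[OF b1 hb1] by blast
        have seg: "\<gamma> t \<in> W k" if "t \<in> {y..z}" for t
        proof -
          have "t \<in> {0..1}" using that y z by auto
          moreover have "dist t x < \<delta>" using that y z by (auto simp: dist_real_def)
          ultimately show ?thesis by (rule d(2))
        qed
        define \<beta>' where "\<beta>' t = (if t \<le> y then \<beta> t else s (\<gamma> t))" for t
        have "continuous_on {0..z} \<beta>'"
          unfolding \<beta>'_def
        proof (rule continuous_on_cases_le)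
          have e1: "{t \<in> {0..z}. t \<le> y} = {0..y}" using False by auto
          show "continuous_on {t \<in> {0..z}. t \<le> y} \<beta>" unfolding e1 by (rule \<beta>(1))
          have e2: "{t \<in> {0..z}. y \<le> t} = {y..z}" using y0 by auto
          show "continuous_on {t \<in> {0..z}. y \<le> t} (\<lambda>t. s (\<gamma> t))" unfolding e2
            by (rule continuous_on_compose2[OF s(1) continuous_on_subset[OF cg]]) (use y z seg in auto)
          show "continuous_on {0..z} (\<lambda>t. t)" by (rule continuous_on_id)
          show "\<And>t. t \<in> {0..z} \<Longrightarrow> t = y \<Longrightarrow> \<beta> t = s (\<gamma> t)" using \<beta>(4) y0 s(4) by auto
        qed
        moreover have "\<beta>' ` {0..z} \<subseteq> M"
        proof
          fix v assume "v \<in> \<beta>' ` {0..z}"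
          then obtain t where t: "t \<in> {0..z}" "v = \<beta>' t" by auto
          show "v \<in> M"
          proof (cases "t \<le> y")
            case True thus ?thesis using t \<beta>(2) by (auto simp: \<beta>'_def)
          next
            case False thus ?thesis using t s(2) seg[of t] by (auto simp: \<beta>'_def)
          qed
        qed
        moreover have "\<beta>' 0 = b0" using \<beta>(3) y0 by (simp add: \<beta>'_def)
        moreover have "\<forall>t\<in>{0..z}. h (\<beta>' t) = \<gamma> t"
        proof
          fix t assume t: "t \<in> {0..z}"
          show "h (\<beta>' t) = \<gamma> t"
          proof (cases "t \<le> y")
            case True thus ?thesis using t \<beta>(4) by (auto simp: \<beta>'_def)
          next
            case False thus ?thesis using t s(3) seg[of t] by (auto simp: \<beta>'_def)
          qed
        qed
        ultimately show ?thesis unfolding Q_def by blast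
      qed
    qed
  qed
  then obtain \<beta> where "continuous_on {0..1} \<beta>" "\<beta> ` {0..1} \<subseteq> M" "\<beta> 0 = b0" "\<forall>s\<in>{0..1}. h (\<beta> s) = \<gamma> s"
    unfolding Q_def by blast
  thus ?thesis by (intro exI[where x=\<beta>]) (auto simp: path_def path_image_def pathstart_def)
qed


definition Wk :: "('n::finite \<Rightarrow> bool) \<Rightarrow> 'n \<Rightarrow> (complex^('n\<times>'n)) set" where
  "Wk par k = {P \<in> hh ` Mtilde par. P$(k,k) \<noteq> 0}"
definition secb :: "complex^('n::finite) \<Rightarrow> 'n \<Rightarrow> complex^('n\<times>'n) \<Rightarrow> complex^'n" where
  "secb b k P = (\<chi> i. (b$k / of_real (cmod (b$k))) * P$(i,k) / of_real (sqrt (Re (P$(k,k)))))"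

lemma hh_kk: "hh c $ (k,k) = of_real ((cmod (c$k))\<^sup>2)"
proof -
  have "hh c $ (k,k) = c$k * cnj (c$k)" by (simp add: hh_def)
  also have "\<dots> = of_real ((cmod (c$k))\<^sup>2)" by (rule complex_norm_square[symmetric])
  finally show ?thesis .
qed

lemma Wk_iff: "c \<in> Mtilde par \<Longrightarrow> hh c \<in> Wk par k \<longleftrightarrow> c$k \<noteq> 0"
  by (auto simp: Wk_def hh_kk)

lemma cont_hh: "continuous_on S hh"
  unfolding hh_def by (intro continuous_intros continuous_on_vec_lambda) 

lemma Wk_open:
  fixes par :: "'n::finite \<Rightarrow> bool" and k :: 'n
  shows "openin (top_of_set (hh ` Mtilde par)) (Wk par k)"
proof -
  have "Wk par k = hh ` Mtilde par \<inter> {P. P$(k,k) \<noteq> 0}" by (auto simp: Wk_def)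
  moreover have "open {P :: complex^('n\<times>'n). P$(k,k) \<noteq> 0}"
    by (intro open_Collect_neq continuous_intros)
  ultimately show ?thesis by (simp add: openin_open_Int)
qed

lemma Wk_cover: "P \<in> hh ` Mtilde par \<Longrightarrow> \<exists>k. P \<in> Wk par k"
proof -
  assume "P \<in> hh ` Mtilde par"
  then obtain c where c: "c \<in> Mtilde par" "P = hh c" by auto
  then obtain k where "c$k \<noteq> 0" using Mt_nz(1)[OF c(1)] by blast
  thus ?thesis using Wk_iff[OF c(1)] c by blast
qed

lemma secb_props:
  fixes b :: "complex^'n::finite" and par :: "'n \<Rightarrow> bool"
  assumes b: "b \<in> Mtilde par" "b$k \<noteq> 0"
  shows "continuous_on (Wk par k) (secb b k)"
    "\<And>P. P \<in> Wk par k \<Longrightarrow> secb b k P \<in> Mtilde par \<and> hh (secb b k P) = P"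
    "secb b k (hh b) = b"
proof -
  have ReP: "Re (P$(k,k)) > 0" if PW: "P \<in> Wk par k" for P
  proof -
    obtain c where c: "c \<in> Mtilde par" "P = hh c" using PW by (auto simp: Wk_def)
    hence "c$k \<noteq> 0" using PW Wk_iff by blast
    thus ?thesis using c by (simp add: hh_kk)
  qed
  show "continuous_on (Wk par k) (secb b k)"
    unfolding secb_def
  proof (intro continuous_on_vec_lambda)
    fix i
    have "continuous_on (Wk par k) (\<lambda>P. complex_of_real (sqrt (Re (P$(k,k)))))"
      by (intro continuous_intros)
    moreover have "\<forall>P\<in>Wk par k. complex_of_real (sqrt (Re (P$(k,k)))) \<noteq> 0" using ReP by (metis less_irrefl of_real_eq_0_iff real_sqrt_eq_zero_cancel_iff)
    ultimately show "continuous_on (Wk par k) (\<lambda>P. b$k / of_real (cmod (b$k)) * P$(i,k) / of_real (sqrt (Re (P$(k,k)))))"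
      by (intro continuous_intros) auto
  qed
  have gen: "secb b k (hh c) = sc ((b$k / of_real (cmod (b$k))) * (cnj (c$k) / of_real (cmod (c$k)))) c"
    if "c$k \<noteq> 0" for c
  proof -
    have "Re (hh c $ (k,k)) = (cmod (c$k))\<^sup>2" by (simp add: hh_kk)
    hence "sqrt (Re (hh c $ (k,k))) = cmod (c$k)" by simp
    thus ?thesis by (simp add: secb_def sc_def vec_eq_iff hh_def field_simps)
  qed
  have unit: "cmod ((b$k / of_real (cmod (b$k))) * (cnj (c$k) / of_real (cmod (c$k)))) = 1" if "c$k \<noteq> 0" for c
    using that b(2) by (simp add: norm_mult norm_divide)
  show "secb b k P \<in> Mtilde par \<and> hh (secb b k P) = P" if P: "P \<in> Wk par k" for P
  proof -
    obtain c where c: "c \<in> Mtilde par" "P = hh c" using P by (auto simp: Wk_def)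
    hence ck: "c$k \<noteq> 0" using P Wk_iff by blast
    show ?thesis using gen[OF ck] unit[OF ck] sc_Mt[OF _ c(1)] hh_sc c(2) by auto
  qed
  have "(b$k / of_real (cmod (b$k))) * (cnj (b$k) / of_real (cmod (b$k))) = 1"
    using b(2) by (simp add: field_simps complex_norm_square[symmetric] power2_eq_square)
  thus "secb b k (hh b) = b" using gen[OF b(2)] by (simp add: sc_def vec_eq_iff)
qed

lemma hh_path_lift:
  fixes par :: "'n::finite \<Rightarrow> bool"
  assumes g: "path \<gamma>" "path_image \<gamma> \<subseteq> hh ` Mtilde par" and b0: "b0 \<in> Mtilde par" "hh b0 = pathstart \<gamma>"
  shows "\<exists>\<beta>. path \<beta> \<and> path_image \<beta> \<subseteq> Mtilde par \<and> pathstart \<beta> = b0 \<and> (\<forall>t\<in>{0..1}. hh (\<beta> t) = \<gamma> t)"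
proof (rule path_lift_gen[where W="Wk par" and T="hh ` Mtilde par" and h=hh and M="Mtilde par", OF Wk_cover Wk_open _ g b0])
  fix b k assume b: "b \<in> Mtilde par" and hb: "hh b \<in> Wk par k"
  hence bk: "b$k \<noteq> 0" using Wk_iff by blast
  show "\<exists>s. continuous_on (Wk par k) s \<and> s ` Wk par k \<subseteq> Mtilde par \<and> (\<forall>P\<in>Wk par k. hh (s P) = P) \<and> s (hh b) = b"
    using secb_props[OF b bk] by (intro exI[where x="secb b k"]) auto
qed

lemma hh_sec:
  fixes b :: "complex^'n::finite" and par :: "'n \<Rightarrow> bool"
  assumes b: "b \<in> Mtilde par"
  shows "\<exists>W s. openin (top_of_set (hh ` Mtilde par)) W \<and> hh b \<in> W \<and> continuous_on W s \<and>
           s ` W \<subseteq> Mtilde par \<and> (\<forall>P\<in>W. hh (s P) = P) \<and> s (hh b) = b"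
proof -
  obtain k where k: "b$k \<noteq> 0" using Mt_nz(1)[OF b] by blast
  show ?thesis using secb_props[OF b k] Wk_open Wk_iff[OF b] k
    by (intro exI[where x="Wk par k"] exI[where x="secb b k"]) auto
qed


definition Fset :: "('n::finite \<Rightarrow> bool) \<Rightarrow> (complex^'n) set" where
  "Fset Q = {w. \<forall>i. \<not> Q i \<longrightarrow> w$i = 0}"

lemma subspace_Fset: "subspace (Fset Q)"
  by (auto simp: subspace_def Fset_def)

definition ax :: "'n::finite \<Rightarrow> complex \<Rightarrow> complex^'n" where
  "ax k c = (\<chi> i. if i = k then c else 0)"

lemma Fset_sc:
  fixes Q :: "'n::finite \<Rightarrow> bool"
  assumes kl: "k \<noteq> l" "Q k" "Q l"
  shows "simply_connected (Fset Q - {0})"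
proof -
  let ?u1 = "ax k 1" and ?u2 = "ax k \<i>" and ?u3 = "ax l 1"
  have i3: "independent {?u3}" by (auto simp: ax_def vec_eq_iff)
  have n2: "?u2 \<notin> span {?u3}"
  proof
    assume "?u2 \<in> span {?u3}"
    then obtain c where "?u2 = c *\<^sub>R ?u3" by (auto simp: span_singleton)
    hence "?u2 $ k = (c *\<^sub>R ?u3) $ k" by simp
    thus False using kl by (simp add: ax_def)
  qed
  have n1: "?u1 \<notin> span {?u2, ?u3}"
  proof
    assume "?u1 \<in> span {?u2, ?u3}"
    then obtain a where "?u1 - a *\<^sub>R ?u2 \<in> span {?u3}" by (auto simp: span_insert)
    then obtain c where "?u1 - a *\<^sub>R ?u2 = c *\<^sub>R ?u3" by (auto simp: span_singleton)
    hence "Re ((?u1 - a *\<^sub>R ?u2) $ k) = Re ((c *\<^sub>R ?u3) $ k)" by simp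
    thus False using kl by (simp add: ax_def)
  qed
  have ind: "independent {?u1, ?u2, ?u3}"
    using n1 n2 i3 by (intro independent_insertI) (auto simp: independent_empty)
  have dist: "?u1 \<noteq> ?u2" "?u1 \<noteq> ?u3" "?u2 \<noteq> ?u3"
  proof -
    show "?u1 \<noteq> ?u2"
    proof assume "?u1 = ?u2" hence "?u1 $ k = ?u2 $ k" by simp thus False by (simp add: ax_def) qed
    show "?u1 \<noteq> ?u3"
    proof assume "?u1 = ?u3" hence "?u1 $ k = ?u3 $ k" by simp thus False using kl by (simp add: ax_def) qed
    show "?u2 \<noteq> ?u3"
    proof assume "?u2 = ?u3" hence "?u2 $ k = ?u3 $ k" by simp thus False using kl by (simp add: ax_def) qed
  qed
  have sub: "{?u1, ?u2, ?u3} \<subseteq> Fset Q" using kl by (auto simp: Fset_def ax_def)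
  have "card {?u1, ?u2, ?u3} \<le> dim (Fset Q)" by (rule independent_card_le_dim[OF sub ind])
  hence "3 \<le> dim (Fset Q)" using dist by simp
  hence "3 \<le> aff_dim (Fset Q)" by (simp add: aff_dim_subspace[OF subspace_Fset])
  thus ?thesis by (intro simply_connected_punctured_convex subspace_imp_convex[OF subspace_Fset])
qed

definition Zset :: "('n::finite \<Rightarrow> bool) \<Rightarrow> (complex^'n) set" where
  "Zset par = {b. (\<exists>i. \<not> par i \<and> b$i \<noteq> 0) \<and> (\<exists>i. par i \<and> b$i \<noteq> 0)}"

definition prj :: "('n::finite \<Rightarrow> bool) \<Rightarrow> complex^'n \<Rightarrow> complex^'n" where
  "prj Q b = (\<chi> i. if Q i then b$i else 0)"

lemma Zset_sc:
  fixes par :: "'n::finite \<Rightarrow> bool"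
  assumes e: "k \<noteq> l" "\<not> par k" "\<not> par l" and o: "k' \<noteq> l'" "par k'" "par l'"
  shows "simply_connected (Zset par)"
proof -
  let ?E = "Fset (\<lambda>i. \<not> par i) - {0}" and ?O = "Fset par - {0}"
  have "simply_connected (?E \<times> ?O)"
    by (intro simply_connected_Times Fset_sc[OF e] Fset_sc[OF o])
  moreover have "(?E \<times> ?O) homeomorphic Zset par"
    unfolding homeomorphic_def
  proof (intro exI[where x="\<lambda>x. fst x + snd x"] exI[where x="\<lambda>b. (prj (\<lambda>i. \<not> par i) b, prj par b)"])
    show "homeomorphism (?E \<times> ?O) (Zset par) (\<lambda>x. fst x + snd x) (\<lambda>b. (prj (\<lambda>i. \<not> par i) b, prj par b))"
      unfolding homeomorphism_def
    proof (intro conjI ballI)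
      show "continuous_on (?E \<times> ?O) (\<lambda>x. fst x + snd x)" by (intro continuous_intros)
      show "continuous_on (Zset par) (\<lambda>b. (prj (\<lambda>i. \<not> par i) b, prj par b))"
      proof -
        have c: "continuous_on (Zset par) (prj Q)" for Q :: "'n \<Rightarrow> bool"
          unfolding prj_def
        proof (intro continuous_on_vec_lambda)
          fix i show "continuous_on (Zset par) (\<lambda>x. if Q i then x $ i else 0)"
            by (cases "Q i") (auto intro!: continuous_intros)
        qed
        show ?thesis by (intro continuous_on_Pair c)
      qed
      show "(prj (\<lambda>i. \<not> par i) (fst x + snd x), prj par (fst x + snd x)) = x" if "x \<in> ?E \<times> ?O" for x
        using that by (auto simp: prj_def Fset_def vec_eq_iff prod_eq_iff)
      show "fst (prj (\<lambda>i. \<not> par i) b, prj par b) + snd (prj (\<lambda>i. \<not> par i) b, prj par b) = b" for b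
        by (auto simp: prj_def vec_eq_iff)
      show "(\<lambda>x. fst x + snd x) ` (?E \<times> ?O) = Zset par"
      proof
        show "(\<lambda>x. fst x + snd x) ` (?E \<times> ?O) \<subseteq> Zset par"
        proof
          fix b assume "b \<in> (\<lambda>x. fst x + snd x) ` (?E \<times> ?O)"
          then obtain x where x: "x \<in> ?E \<times> ?O" "b = fst x + snd x" by auto
          define u v where "u = fst x" and "v = snd x"
          have uv: "u \<in> ?E" "v \<in> ?O" "b = u + v" using x by (auto simp: u_def v_def)
          obtain i where i: "u$i \<noteq> 0" using uv(1) by (metis DiffD2 singletonI vec_eq_iff zero_index)
          obtain j where j: "v$j \<noteq> 0" using uv(2) by (metis DiffD2 singletonI vec_eq_iff zero_index)
          have "\<not> par i" "v$i = 0" using uv i by (auto simp: Fset_def)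
          moreover have "par j" "u$j = 0" using uv j by (auto simp: Fset_def)
          ultimately show "b \<in> Zset par" using i j uv(3) unfolding Zset_def by auto
        qed
        show "Zset par \<subseteq> (\<lambda>x. fst x + snd x) ` (?E \<times> ?O)"
        proof
          fix b assume b: "b \<in> Zset par"
          have "prj (\<lambda>i. \<not> par i) b \<in> ?E" "prj par b \<in> ?O"
            using b by (auto simp: Zset_def Fset_def prj_def vec_eq_iff)
          moreover have "b = prj (\<lambda>i. \<not> par i) b + prj par b" by (auto simp: prj_def vec_eq_iff)
          ultimately show "b \<in> (\<lambda>x. fst x + snd x) ` (?E \<times> ?O)" by force
        qed
      qed
      show "(\<lambda>b. (prj (\<lambda>i. \<not> par i) b, prj par b)) ` Zset par = ?E \<times> ?O"
      proof
        show "(\<lambda>b. (prj (\<lambda>i. \<not> par i) b, prj par b)) ` Zset par \<subseteq> ?E \<times> ?O"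
          by (auto simp: Zset_def Fset_def prj_def vec_eq_iff) (metis (full_types))+
        show "?E \<times> ?O \<subseteq> (\<lambda>b. (prj (\<lambda>i. \<not> par i) b, prj par b)) ` Zset par"
        proof
          fix x assume x: "x \<in> ?E \<times> ?O"
          obtain i where i: "fst x$i \<noteq> 0" using x by (metis DiffD2 mem_Times_iff singletonI vec_eq_iff zero_index)
          obtain j where j: "snd x$j \<noteq> 0" using x by (metis DiffD2 mem_Times_iff singletonI vec_eq_iff zero_index)
          have fx: "fst x \<in> Fset (\<lambda>i. \<not> par i)" "snd x \<in> Fset par" using x by auto
          have pi: "\<not> par i" using fx(1) i by (auto simp: Fset_def)
          have pj: "par j" using fx(2) j by (auto simp: Fset_def)
          have "snd x$i = 0" using fx(2) pi by (auto simp: Fset_def)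
          moreover have "fst x$j = 0" using fx(1) pj by (auto simp: Fset_def)
          ultimately have "fst x + snd x \<in> Zset par" using i j pi pj unfolding Zset_def by auto
          moreover have "x = (prj (\<lambda>i. \<not> par i) (fst x + snd x), prj par (fst x + snd x))"
            using x by (auto simp: prj_def Fset_def vec_eq_iff prod_eq_iff)
          ultimately show "x \<in> (\<lambda>b. (prj (\<lambda>i. \<not> par i) b, prj par b)) ` Zset par" by blast
        qed
      qed
    qed
  qed
  ultimately show ?thesis by (rule homeomorphic_simply_connected[rotated])
qed

lemma sum_norm_sq: "(\<Sum>i\<in>UNIV. (cmod (b$i))\<^sup>2) = (norm b)\<^sup>2"
  by (simp add: norm_vec_def L2_set_def sum_nonneg)

lemma norm_sq1: "(norm (b::'a::real_normed_vector))\<^sup>2 = 1 \<longleftrightarrow> norm b = 1"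
  by (metis norm_ge_zero one_power2 power2_eq_iff_nonneg zero_le_one)

lemma Mt_sc:
  fixes par :: "'n::finite \<Rightarrow> bool"
  assumes e: "k \<noteq> l" "\<not> par k" "\<not> par l" and o: "k' \<noteq> l'" "par k'" "par l'"
  shows "simply_connected (Mtilde par)"
proof (rule retract_of_simply_connected[OF Zset_sc[OF e o]])
  have Mt: "Mtilde par = {b \<in> Zset par. norm b = 1}"
    by (auto simp: Mtilde_def Zset_def sum_norm_sq norm_sq1)
  have nz: "b \<noteq> 0" if "b \<in> Zset par" for b using that by (auto simp: Zset_def)
  define r where "r b = (1 / norm b) *\<^sub>R b" for b :: "complex^'n"
  have "retraction (Zset par) (Mtilde par) r"
    unfolding retraction_def
  proof (intro conjI ballI)
    show "Mtilde par \<subseteq> Zset par" using Mt by auto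
    show "continuous_on (Zset par) r" unfolding r_def
      by (intro continuous_intros) (use nz in auto)
    show "r \<in> Zset par \<rightarrow> Mtilde par"
    proof
      fix b assume b0: "b \<in> Zset par"
      define x where "x = r b"
      have b: "b \<in> Zset par" "x = r b" using b0 x_def by auto
      have "norm x = 1" using b nz[OF b(1)] by (simp add: r_def)
      moreover have "x \<in> Zset par" using b nz[OF b(1)] by (auto simp: Zset_def r_def)
      ultimately show "r b \<in> Mtilde par" using Mt x_def by auto
    qed
    show "r x = x" if "x \<in> Mtilde par" for x using that Mt by (auto simp: r_def)
  qed
  thus "Mtilde par retract_of Zset par" unfolding retract_of_def by blast
qed


lemma T_sc:
  fixes par :: "'n::finite \<Rightarrow> bool"
  assumes sM: "simply_connected (Mtilde par)"
  shows "simply_connected (hh ` Mtilde par)"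
  unfolding simply_connected_eq_contractible_path
proof (intro conjI allI impI)
  let ?M = "Mtilde par" and ?T = "hh ` Mtilde par"
  have ch: "continuous_on ?M hh" by (rule cont_hh)
  show "path_connected ?T"
    by (rule path_connected_continuous_image[OF ch simply_connected_imp_path_connected[OF sM]])
  fix \<gamma> assume g: "path \<gamma> \<and> path_image \<gamma> \<subseteq> ?T \<and> pathfinish \<gamma> = pathstart \<gamma>"
  obtain b0 where b0: "b0 \<in> ?M" "hh b0 = pathstart \<gamma>"
    using g pathstart_in_path_image by (metis image_iff subsetD)
  obtain \<beta> where \<beta>: "path \<beta>" "path_image \<beta> \<subseteq> ?M" "pathstart \<beta> = b0" "\<forall>t\<in>{0..1}. hh (\<beta> t) = \<gamma> t"
    using hh_path_lift[of \<gamma> par b0] g b0 by blast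
  let ?x = "pathstart \<gamma>"
  have "hh (pathfinish \<beta>) = hh b0" using \<beta>(4) g b0 by (simp add: pathfinish_def pathstart_def)
  then obtain c where c: "cmod c = 1" "pathfinish \<beta> = sc c b0" using hh_fiber Mt_ne0[OF b0(1)] by metis
  define \<theta> where "\<theta> = Arg c"
  have "c \<noteq> 0" using c(1) by auto
  hence ce: "c = exp (\<i> * of_real \<theta>)" using Arg_eq[of c] c(1) by (simp add: \<theta>_def)
  define \<delta> where "\<delta> t = sc (exp (\<i> * of_real (\<theta> * (1 - t)))) b0" for t
  have d: "path \<delta>" unfolding \<delta>_def sc_def path_def by (intro continuous_intros continuous_on_vec_lambda)
  have dM: "path_image \<delta> \<subseteq> ?M" using b0 by (auto simp: path_image_def \<delta>_def intro!: sc_Mt)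
  have dh: "hh \<circ> \<delta> = linepath ?x ?x" using b0 by (auto simp: \<delta>_def hh_sc fun_eq_iff)
  have ds: "pathstart \<delta> = pathfinish \<beta>" using c ce by (simp add: \<delta>_def pathstart_def)
  have df: "pathfinish \<delta> = b0" by (simp add: \<delta>_def pathfinish_def sc_def)
  have loop: "homotopic_paths ?M (\<beta> +++ \<delta>) (linepath b0 b0)"
  proof -
    have "path (\<beta> +++ \<delta>)" "path_image (\<beta> +++ \<delta>) \<subseteq> ?M" "pathfinish (\<beta> +++ \<delta>) = pathstart (\<beta> +++ \<delta>)"
      using \<beta> d dM ds df by (auto simp: path_image_join)
    hence "homotopic_paths ?M (\<beta> +++ \<delta>) (linepath (pathstart (\<beta> +++ \<delta>)) (pathstart (\<beta> +++ \<delta>)))"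
      using sM unfolding simply_connected_eq_contractible_path by blast
    thus ?thesis using \<beta>(3) by simp
  qed
  have "homotopic_paths ?T (hh \<circ> (\<beta> +++ \<delta>)) (hh \<circ> linepath b0 b0)"
    by (rule homotopic_paths_continuous_image[OF loop ch]) auto
  moreover have "hh \<circ> (\<beta> +++ \<delta>) = (hh \<circ> \<beta>) +++ linepath ?x ?x" using dh by (simp add: path_compose_join)
  moreover have "hh \<circ> linepath b0 b0 = linepath ?x ?x" using b0 by (auto simp: fun_eq_iff)
  ultimately have h1: "homotopic_paths ?T ((hh \<circ> \<beta>) +++ linepath ?x ?x) (linepath ?x ?x)" by simp
  have pb: "path (hh \<circ> \<beta>)" "path_image (hh \<circ> \<beta>) \<subseteq> ?T"
    using \<beta> by (auto intro: path_continuous_image continuous_on_subset[OF cont_hh] simp: path_image_compose)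
  have fb: "pathfinish (hh \<circ> \<beta>) = ?x" using \<beta>(4) g by (simp add: pathfinish_def pathstart_def)
  have h2: "homotopic_paths ?T ((hh \<circ> \<beta>) +++ linepath ?x ?x) (hh \<circ> \<beta>)"
    using homotopic_paths_rid[OF pb] fb by simp
  have h3: "homotopic_paths ?T \<gamma> (hh \<circ> \<beta>)"
    using g \<beta>(4) by (intro homotopic_paths_eq) auto
  show "homotopic_paths ?T \<gamma> (linepath (pathstart \<gamma>) (pathstart \<gamma>))"
  proof -
    have "homotopic_paths ?T (hh \<circ> \<beta>) ((hh \<circ> \<beta>) +++ linepath ?x ?x)" using h2 by (rule homotopic_paths_sym)
    hence "homotopic_paths ?T (hh \<circ> \<beta>) (linepath ?x ?x)" using h1 by (rule homotopic_paths_trans)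
    thus ?thesis using h3 homotopic_paths_trans by blast
  qed
qed


lemma sq_nonpos: "(w::complex)\<^sup>2 \<in> \<real>\<^sub>\<le>\<^sub>0 \<longleftrightarrow> Re w = 0"
proof -
  have r: "Re (w\<^sup>2) = (Re w)\<^sup>2 - (Im w)\<^sup>2" and i: "Im (w\<^sup>2) = 2 * Re w * Im w"
    by (simp_all add: power2_eq_square)
  show ?thesis
  proof
    assume "w\<^sup>2 \<in> \<real>\<^sub>\<le>\<^sub>0"
    hence a: "Re (w\<^sup>2) \<le> 0" "Im (w\<^sup>2) = 0" by (auto simp: complex_nonpos_Reals_iff)
    show "Re w = 0"
    proof (rule ccontr)
      assume "Re w \<noteq> 0"
      hence "Im w = 0" using a(2) i by simp
      moreover have "(Re w)\<^sup>2 > 0" using \<open>Re w \<noteq> 0\<close> by simp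
      ultimately show False using a(1) r by simp
    qed
  next
    assume "Re w = 0"
    thus "w\<^sup>2 \<in> \<real>\<^sub>\<le>\<^sub>0" using r i by (simp add: complex_nonpos_Reals_iff)
  qed
qed

lemma Re_csqrt_pos: "z \<notin> \<real>\<^sub>\<le>\<^sub>0 \<Longrightarrow> Re (csqrt z) > 0"
proof -
  assume z: "z \<notin> \<real>\<^sub>\<le>\<^sub>0"
  have "(csqrt z)\<^sup>2 \<notin> \<real>\<^sub>\<le>\<^sub>0" using z by simp
  hence "Re (csqrt z) \<noteq> 0" using sq_nonpos by blast
  thus ?thesis using Re_csqrt[of z] by linarith
qed

lemma cont_pp:
  fixes par :: "'n::finite \<Rightarrow> bool" and X :: "(complex^('n\<times>'n)) set"
  shows "continuous_on X (pp par)"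
proof -
  have c: "continuous_on X (\<lambda>P. (\<chi> a. if Q a then P$a else (0::complex)) :: complex^('n\<times>'n))" for Q :: "'n\<times>'n \<Rightarrow> bool"
  proof (intro continuous_on_vec_lambda)
    fix a show "continuous_on X (\<lambda>x :: complex^('n\<times>'n). if Q a then x $ a else 0)"
      by (cases "Q a") (auto intro!: continuous_intros)
  qed
  have cD: "continuous_on X (Dp par)" unfolding Dp_def by (rule c)
  have cO: "continuous_on X (Op par)" unfolding Op_def
  proof (intro continuous_on_vec_lambda)
    fix a show "continuous_on X (\<lambda>x :: complex^('n\<times>'n). if par (fst a) = par (snd a) then 0 else x $ a)"
      by (cases "par (fst a) = par (snd a)") (auto intro!: continuous_intros)
  qed
  show ?thesis unfolding pp_def
    by (intro continuous_on_Pair cD continuous_on_vec_lambda continuous_intros cO)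
qed

lemma cont_sg:
  fixes par :: "'n::finite \<Rightarrow> bool" and X :: "(complex^('n\<times>'n)) set"
  shows "continuous_on X (sg par)"
  unfolding sg_def by (intro continuous_on_vec_lambda continuous_intros)

lemma pp_cov:
  fixes par :: "'n::finite \<Rightarrow> bool"
  shows "covering_space (hh ` Mtilde par) (pp par) (pp par ` hh ` Mtilde par)"
proof (rule covering_spaceI)
  let ?T = "hh ` Mtilde par" and ?S = "pp par ` hh ` Mtilde par"
  show "continuous_on ?T (pp par)" by (rule cont_pp)
  show "pp par ` ?T = ?S" by simp
  fix y assume "y \<in> ?S"
  then obtain b0 where b0: "b0 \<in> Mtilde par" "y = pp par (hh b0)" by auto
  obtain a0 where a0: "Op par (hh b0) $ a0 \<noteq> 0" using Op_hh_nz[OF b0(1)] by blast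
  define z0 where "z0 = Op par (hh b0) $ a0"
  have z0: "z0 \<noteq> 0" using a0 by (simp add: z0_def)
  have na0: "par (fst a0) \<noteq> par (snd a0)" using a0 by (auto simp: Op_def split: if_splits)
  have Oa0: "Op par Q $ a0 = Q $ a0" for Q using na0 by (simp add: Op_def)
  have sndpp: "snd (pp par Q) $ (a, a0) = Op par Q $ a * Q $ a0" for Q a by (simp add: pp_def Oa0)
  define g where "g y' = snd y' $ (a0,a0) / z0\<^sup>2" for y' :: "(complex^('n\<times>'n)) \<times> (complex^(('n\<times>'n)\<times>('n\<times>'n)))"
  have gpp: "g (pp par Q) = (Q $ a0 / z0)\<^sup>2" for Q
    using sndpp[of Q a0] Oa0[of Q] by (simp add: g_def power_divide power2_eq_square)
  define W where "W = {y' \<in> ?S. g y' \<notin> \<real>\<^sub>\<le>\<^sub>0}"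
  define r where "r y' = z0 * csqrt (g y')" for y'
  define q where "q y' = fst y' + (\<chi> a. snd y' $ (a,a0) / r y')" for y'
  define up where "up = {Q \<in> ?T. Re (Q $ a0 / z0) > 0}"
  define um where "um = {Q \<in> ?T. Re (Q $ a0 / z0) < 0}"
  have sgT: "sg par Q \<in> ?T" if QT: "Q \<in> ?T" for Q
  proof -
    obtain b where b: "b \<in> Mtilde par" "Q = hh b" using QT by auto
    hence "sg par Q = hh (tw par b)" by (simp add: sg_hh)
    thus ?thesis using tw_Mt[OF b(1)] by simp
  qed
  have sga0: "sg par Q $ a0 = - Q $ a0" for Q using na0 by (simp add: sg_def sgn2_def)
  have ppsg: "pp par (sg par Q) = pp par Q" for Q by (rule pp_sg)
  have qpp: "q (pp par Q) = Q" if "Q \<in> up" for Q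
  proof -
    have re: "Re (Q $ a0 / z0) > 0" using that by (simp add: up_def)
    have "r (pp par Q) = z0 * (Q $ a0 / z0)" unfolding r_def gpp using re by (simp add: csqrt_square)
    hence rq: "r (pp par Q) = Q $ a0" using z0 by simp
    have qa: "Q $ a0 \<noteq> 0" using re by auto
    show ?thesis unfolding q_def rq
      by (simp add: vec_eq_iff sndpp qa) (simp add: pp_def Dp_def Op_def)
  qed
  have ex: "\<exists>Q\<in>up. y' = pp par Q" if yW: "y' \<in> W" for y'
  proof -
    obtain Q where Q: "Q \<in> ?T" "y' = pp par Q" using yW by (auto simp: W_def)
    have "(Q $ a0 / z0)\<^sup>2 \<notin> \<real>\<^sub>\<le>\<^sub>0" using yW Q gpp by (auto simp: W_def)
    hence "Re (Q $ a0 / z0) \<noteq> 0" using sq_nonpos by blast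
    show ?thesis
    proof (cases "Re (Q $ a0 / z0) > 0")
      case True thus ?thesis using Q by (auto simp: up_def)
    next
      case False
      hence "Re (sg par Q $ a0 / z0) > 0" using \<open>Re (Q $ a0 / z0) \<noteq> 0\<close> sga0 by simp
      moreover have "sg par Q \<in> ?T" using sgT Q(1) by blast
      ultimately have "sg par Q \<in> up" by (simp add: up_def)
      moreover have "y' = pp par (sg par Q)" using Q(2) ppsg by simp
      ultimately show ?thesis by blast
    qed
  qed
  have upW: "pp par Q \<in> W" if "Q \<in> up" for Q
  proof -
    have "Re (Q $ a0 / z0) \<noteq> 0" using that by (simp add: up_def)
    hence "(Q $ a0 / z0)\<^sup>2 \<notin> \<real>\<^sub>\<le>\<^sub>0" using sq_nonpos by blast
    thus ?thesis using that by (auto simp: W_def up_def gpp)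
  qed
  have hup: "homeomorphism up W (pp par) q"
    unfolding homeomorphism_def
  proof (intro conjI ballI)
    show "\<And>Q. Q \<in> up \<Longrightarrow> q (pp par Q) = Q" by (rule qpp)
    show "pp par ` up = W"
    proof
      show "pp par ` up \<subseteq> W" using upW by blast
      show "W \<subseteq> pp par ` up"
      proof
        fix y' assume "y' \<in> W"
        then obtain Q where "Q \<in> up" "y' = pp par Q" using ex by blast
        thus "y' \<in> pp par ` up" by blast
      qed
    qed
    show "continuous_on up (pp par)" by (rule cont_pp)
    show "pp par (q y') = y'" if yW: "y' \<in> W" for y'
    proof -
      obtain Q where "Q \<in> up" "y' = pp par Q" using ex yW by blast
      thus ?thesis using qpp by simp
    qed
    show "q ` W = up"
    proof
      show "q ` W \<subseteq> up"
      proof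
        fix x assume "x \<in> q ` W"
        then obtain y' where "y' \<in> W" "x = q y'" by blast
        then obtain Q where "Q \<in> up" "y' = pp par Q" using ex by blast
        thus "x \<in> up" using qpp \<open>x = q y'\<close> by simp
      qed
      show "up \<subseteq> q ` W"
      proof
        fix Q assume "Q \<in> up"
        hence "Q = q (pp par Q)" "pp par Q \<in> W" using qpp upW by auto
        thus "Q \<in> q ` W" by blast
      qed
    qed
    have cg: "continuous_on W (\<lambda>y'. csqrt (g y'))"
    proof (rule continuous_at_imp_continuous_on, intro ballI)
      fix y' assume "y' \<in> W"
      hence "g y' \<notin> \<real>\<^sub>\<le>\<^sub>0" by (simp add: W_def)
      thus "isCont (\<lambda>y'. csqrt (g y')) y'" unfolding g_def
        by (intro isCont_o2[where f="\<lambda>y'. snd y' $ (a0,a0) / z0\<^sup>2" and g=csqrt] continuous_at_csqrt continuous_intros) (auto simp: g_def)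
    qed
    have rnz: "r y' \<noteq> 0" if "y' \<in> W" for y'
      using that z0 by (auto simp: r_def W_def)
    show "continuous_on W q" unfolding q_def r_def
      by (intro continuous_intros continuous_on_vec_lambda cg) (use rnz in \<open>auto simp: r_def\<close>)
  qed
  have sgup: "sg par ` up = um" and sgum: "sg par ` um = up"
  proof -
    have a: "sg par Q \<in> um" if "Q \<in> up" for Q using that sgT sga0 by (auto simp: up_def um_def)
    have b: "sg par Q \<in> up" if "Q \<in> um" for Q using that sgT sga0 by (auto simp: up_def um_def)
    show "sg par ` up = um"
    proof
      show "sg par ` up \<subseteq> um" using a by blast
      show "um \<subseteq> sg par ` up"
      proof
        fix Q assume "Q \<in> um"
        hence "sg par Q \<in> up" using b by auto
        moreover have "Q = sg par (sg par Q)" by (rule sg_sg[symmetric])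
        ultimately show "Q \<in> sg par ` up" by blast
      qed
    qed
    show "sg par ` um = up"
    proof
      show "sg par ` um \<subseteq> up" using b by blast
      show "up \<subseteq> sg par ` um"
      proof
        fix Q assume "Q \<in> up"
        hence "sg par Q \<in> um" using a by auto
        moreover have "Q = sg par (sg par Q)" by (rule sg_sg[symmetric])
        ultimately show "Q \<in> sg par ` um" by blast
      qed
    qed
  qed
  have hum: "homeomorphism um W (pp par) (sg par \<circ> q)"
    unfolding homeomorphism_def
  proof (intro conjI ballI)
    fix Q assume Q: "Q \<in> um"
    hence "sg par Q \<in> up" using sgum by blast
    thus "(sg par \<circ> q) (pp par Q) = Q" using qpp[of "sg par Q"] ppsg sg_sg by simp
  next
    have pW: "pp par ` up = W" using hup unfolding homeomorphism_def by blast
    show "pp par ` um = W"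
    proof
      show "pp par ` um \<subseteq> W"
      proof
        fix x assume "x \<in> pp par ` um"
        then obtain Q where Q: "Q \<in> um" "x = pp par Q" by blast
        hence "sg par Q \<in> up" using sgum by blast
        thus "x \<in> W" using pW Q ppsg by (metis image_eqI)
      qed
      show "W \<subseteq> pp par ` um"
      proof
        fix y' assume "y' \<in> W"
        then obtain Q where Q: "Q \<in> up" "y' = pp par Q" using pW by blast
        hence "sg par Q \<in> um" "y' = pp par (sg par Q)" using sgup ppsg by auto
        thus "y' \<in> pp par ` um" by blast
      qed
    qed
    show "continuous_on um (pp par)" by (rule cont_pp)
    show "\<And>y'. y' \<in> W \<Longrightarrow> pp par ((sg par \<circ> q) y') = y'" using hup ppsg unfolding homeomorphism_def by simp
    have qW: "q ` W = up" using hup unfolding homeomorphism_def by blast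
    have "(sg par \<circ> q) ` W = sg par ` (q ` W)" by (rule image_comp[symmetric])
    thus "(sg par \<circ> q) ` W = um" using qW sgup by simp
    show "continuous_on W (sg par \<circ> q)" using hup cont_sg unfolding homeomorphism_def
      by (intro continuous_on_compose) auto
  qed
  show "\<exists>W. y \<in> W \<and> openin (top_of_set ?S) W \<and>
           (\<exists>v. \<Union>v = ?T \<inter> pp par -` W \<and> (\<forall>u\<in>v. openin (top_of_set ?T) u) \<and>
                pairwise disjnt v \<and> (\<forall>u\<in>v. \<exists>q. homeomorphism u W (pp par) q))"
  proof (intro exI conjI)
    have "hh b0 \<in> up" using b0 z0 by (simp add: up_def z0_def Oa0)
    thus "y \<in> W" using upW b0 by simp
    show "openin (top_of_set ?S) W"
    proof -
      have "open (g -` (- \<real>\<^sub>\<le>\<^sub>0))" unfolding g_def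
        by (intro continuous_open_vimage) (use z0 in \<open>auto intro!: continuous_intros\<close>)
      moreover have "W = ?S \<inter> g -` (- \<real>\<^sub>\<le>\<^sub>0)" by (auto simp: W_def)
      ultimately show ?thesis by (simp add: openin_open_Int)
    qed
    show "\<Union>{up, um} = ?T \<inter> pp par -` W"
    proof
      show "\<Union>{up, um} \<subseteq> ?T \<inter> pp par -` W"
      proof
        fix Q assume "Q \<in> \<Union>{up, um}"
        hence "Q \<in> up \<or> Q \<in> um" by blast
        thus "Q \<in> ?T \<inter> pp par -` W"
        proof
          assume "Q \<in> up" thus ?thesis using upW by (auto simp: up_def)
        next
          assume Q: "Q \<in> um"
          hence "sg par Q \<in> up" using sgum by blast
          hence "pp par Q \<in> W" using upW ppsg by metis
          thus ?thesis using Q by (auto simp: um_def)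
        qed
      qed
      show "?T \<inter> pp par -` W \<subseteq> \<Union>{up, um}"
      proof
        fix Q assume Q: "Q \<in> ?T \<inter> pp par -` W"
        hence "(Q $ a0 / z0)\<^sup>2 \<notin> \<real>\<^sub>\<le>\<^sub>0" using gpp by (auto simp: W_def)
        hence "Re (Q $ a0 / z0) \<noteq> 0" using sq_nonpos by blast
        thus "Q \<in> \<Union>{up, um}" using Q by (auto simp: up_def um_def)
      qed
    qed
    show "\<forall>u\<in>{up, um}. openin (top_of_set ?T) u"
    proof -
      have "open {Q :: complex^('n\<times>'n). Re (Q $ a0 / z0) > 0}" "open {Q :: complex^('n\<times>'n). Re (Q $ a0 / z0) < 0}"
        using z0 by (auto intro!: open_Collect_less continuous_intros)
      thus ?thesis unfolding up_def um_def by (auto simp: Collect_conj_eq Int_commute intro: openin_open_Int)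
    qed
    show "pairwise disjnt {up, um}" by (auto simp: pairwise_def disjnt_def up_def um_def)
    show "\<forall>u\<in>{up, um}. \<exists>q. homeomorphism u W (pp par) q" using hup hum by blast
  qed
qed


lemma sec_compose:
  fixes h :: "'a::real_normed_vector \<Rightarrow> 'b::real_normed_vector" and p :: "'b \<Rightarrow> 'c::real_normed_vector"
  assumes cov: "covering_space T p S" and hbT: "h b \<in> T"
    and hsec: "\<exists>W1 s1. openin (top_of_set T) W1 \<and> h b \<in> W1 \<and> continuous_on W1 s1 \<and> s1 ` W1 \<subseteq> M \<and>
                 (\<forall>P\<in>W1. h (s1 P) = P) \<and> s1 (h b) = b"
  shows "\<exists>W s. openin (top_of_set S) W \<and> p (h b) \<in> W \<and> continuous_on W s \<and> s ` W \<subseteq> M \<and>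
           (\<forall>y\<in>W. p (h (s y)) = y) \<and> s (p (h b)) = b"
proof -
  obtain W1 s1 where W1: "openin (top_of_set T) W1" "h b \<in> W1" "continuous_on W1 s1" "s1 ` W1 \<subseteq> M"
    "\<forall>P\<in>W1. h (s1 P) = P" "s1 (h b) = b" using hsec by blast
  let ?x = "h b"
  have pxS: "p ?x \<in> S" using cov hbT by (auto simp: covering_space_def)
  obtain Wc v where Wc: "p ?x \<in> Wc" "openin (top_of_set S) Wc" "\<Union>v = T \<inter> p -` Wc"
    "\<forall>u\<in>v. openin (top_of_set T) u" "\<forall>u\<in>v. \<exists>q. homeomorphism u Wc p q"
    using cov pxS unfolding covering_space_def by metis
  have "?x \<in> \<Union>v" using Wc(3) hbT Wc(1) by auto
  then obtain u where u: "u \<in> v" "?x \<in> u" by blast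
  then obtain q where q: "homeomorphism u Wc p q" using Wc(5) by blast
  have uT: "u \<subseteq> T" using Wc(3) u(1) by blast
  have qWc: "q ` Wc = u" "continuous_on Wc q" "\<And>y. y \<in> Wc \<Longrightarrow> p (q y) = y" "\<And>z. z \<in> u \<Longrightarrow> q (p z) = z"
    using q unfolding homeomorphism_def by auto
  define W where "W = Wc \<inter> q -` W1"
  have "openin (top_of_set Wc) W" unfolding W_def
    by (rule continuous_openin_preimage[OF qWc(2) _ W1(1)]) (use qWc(1) uT in auto)
  hence oW: "openin (top_of_set S) W" using Wc(2) openin_trans by blast
  show ?thesis
  proof (intro exI conjI)
    show "openin (top_of_set S) W" by (rule oW)
    show "p ?x \<in> W" using Wc(1) qWc(4)[OF u(2)] W1(2) by (simp add: W_def)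
    show "continuous_on W (s1 \<circ> q)"
      by (rule continuous_on_compose[OF continuous_on_subset[OF qWc(2)] continuous_on_subset[OF W1(3)]])
         (auto simp: W_def)
    show "(s1 \<circ> q) ` W \<subseteq> M" using W1(4) by (auto simp: W_def)
    show "\<forall>y\<in>W. p (h ((s1 \<circ> q) y)) = y" using W1(5) qWc(3) by (auto simp: W_def)
    show "(s1 \<circ> q) (p ?x) = b" using qWc(4)[OF u(2)] W1(6) by simp
  qed
qed

lemma nf2_main:
  fixes par :: "'n::finite \<Rightarrow> bool"
  assumes e: "k \<noteq> l" "\<not> par k" "\<not> par l" and o: "k' \<noteq> l'" "par k'" "par l'"
    and x0: "x0 \<in> topspace (Mspace par)"
  shows "fundamental_group (Mspace par) x0 \<cong> integer_mod_group 2"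
  unfolding Mspace_def
proof (rule main_reduction[where f="pp par \<circ> hh" and S="pp par ` hh ` Mtilde par"])
  let ?M = "Mtilde par" and ?T = "hh ` Mtilde par" and ?S = "pp par ` hh ` Mtilde par"
  show "x0 \<in> topspace (quotient_topology (top_of_set ?M) (gauge_equiv par))" using x0 by (simp add: Mspace_def)
  show "continuous_on ?M (pp par \<circ> hh)" by (intro continuous_on_compose cont_hh cont_pp)
  show "?S = (pp par \<circ> hh) ` ?M" by (simp add: image_comp)
  show "gauge_equiv par x y = ((pp par \<circ> hh) x = (pp par \<circ> hh) y)" if "x \<in> ?M" "y \<in> ?M" for x y
    using Req2[OF that] by simp
  show "\<exists>W s. openin (top_of_set ?S) W \<and> (pp par \<circ> hh) b \<in> W \<and> continuous_on W s \<and> s ` W \<subseteq> ?M \<and>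
          (\<forall>y\<in>W. (pp par \<circ> hh) (s y) = y) \<and> s ((pp par \<circ> hh) b) = b" if b: "b \<in> ?M" for b
    using sec_compose[OF pp_cov _ hh_sec[OF b]] b by simp
  show "\<exists>\<kappa>. crit ?S y0 \<kappa> (integer_mod_group 2)" if y0: "y0 \<in> ?S" for y0
  proof (rule crit_Z2[OF pp_cov T_sc[OF Mt_sc[OF e o]] cont_sg _ _ _ _ y0])
    show "sg par ` ?T \<subseteq> ?T"
    proof
      fix Q assume "Q \<in> sg par ` ?T"
      then obtain b where b: "b \<in> ?M" "Q = sg par (hh b)" by auto
      thus "Q \<in> ?T" using tw_Mt[OF b(1)] by (simp add: sg_hh)
    qed
    show "sg par x \<noteq> x" if xT: "x \<in> ?T" for x
    proof
      assume eq: "sg par x = x"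
      obtain b where b: "b \<in> ?M" "x = hh b" using xT by auto
      obtain a where a: "Op par x $ a \<noteq> 0" using Op_hh_nz[OF b(1)] b(2) by blast
      have "Op par x = - Op par x" using Op_sg[of par x] eq by simp
      hence "Op par x $ a = - Op par x $ a" by (metis vector_uminus_component)
      thus False using a by simp
    qed
    show "pp par (sg par x) = pp par x" for x by (rule pp_sg)
    show "y = x \<or> y = sg par x" if xy: "x \<in> ?T" "y \<in> ?T" "pp par x = pp par y" for x y
    proof -
      obtain b where b: "b \<in> ?M" "x = hh b" using xy by auto
      show ?thesis using pp_fiber[OF b(1)] xy(3) b(2) by metis
    qed
  qed
qed


lemma two_elems:
  assumes "finite A" "2 \<le> card A" shows "\<exists>a b. a \<in> A \<and> b \<in> A \<and> a \<noteq> b"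
proof -
  have "A \<noteq> {}" using assms by auto
  then obtain a where a: "a \<in> A" by blast
  have "card (A - {a}) = card A - 1" using a assms(1) by simp
  hence "card (A - {a}) \<noteq> 0" using assms(2) by simp
  hence "A - {a} \<noteq> {}" by (metis card.empty)
  then obtain b where "b \<in> A - {a}" by blast
  thus ?thesis using a by blast
qed

theorem mainTheorem10:
  fixes NF :: nat and par :: "'n::finite \<Rightarrow> bool" and x0 :: "(complex^'n) set"
  assumes "NF \<ge> 1"
    and "CARD('n) = 2 ^ NF"
    and "card {i. par i} = card {i. \<not> par i}"
    and "x0 \<in> topspace (Mspace par)"
  shows "(NF = 1 \<longrightarrow> fundamental_group (Mspace par) x0 \<cong> integer_group) \<and>
         (NF \<ge> 2 \<longrightarrow> fundamental_group (Mspace par) x0 \<cong> integer_mod_group 2)"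
proof -
  have U: "(UNIV :: 'n set) = {i. par i} \<union> {i. \<not> par i}" by auto
  have "card (UNIV :: 'n set) = card {i. par i} + card {i. \<not> par i}"
    by (subst U, rule card_Un_disjoint) auto
  hence c2: "2 * card {i. par i} = 2 ^ NF" using assms(2,3) by simp
  obtain m where m: "NF = Suc m" using assms(1) by (cases NF) auto
  have cp: "card {i. par i} = 2 ^ m" and cn: "card {i. \<not> par i} = 2 ^ m"
    using c2 assms(3) m by simp_all
  show ?thesis
  proof (intro conjI impI)
    assume "NF = 1"
    hence "m = 0" using m by simp
    hence "card {i. par i} = 1" "card {i. \<not> par i} = 1" using cp cn by simp_all
    then obtain od e where od: "{i. par i} = {od}" and e: "{i. \<not> par i} = {e}"
      by (metis card_1_singletonE)
    have eo: "\<And>i. i = e \<or> i = od" "e \<noteq> od" "\<not> par e" "par od" using od e by blast+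
    show "fundamental_group (Mspace par) x0 \<cong> integer_group" by (rule nf1_main[OF eo assms(4)])
  next
    assume "NF \<ge> 2"
    hence "m \<ge> 1" using m by simp
    hence "2 ^ 1 \<le> (2::nat) ^ m" by (intro power_increasing) auto
    hence "2 \<le> card {i. par i}" "2 \<le> card {i. \<not> par i}" using cp cn by simp_all
    then obtain k l k' l' where "k \<in> {i. \<not> par i}" "l \<in> {i. \<not> par i}" "k \<noteq> l"
      "k' \<in> {i. par i}" "l' \<in> {i. par i}" "k' \<noteq> l'"
      using two_elems[of "{i. par i}"] two_elems[of "{i. \<not> par i}"] by (meson finite)
    hence "k \<noteq> l" "\<not> par k" "\<not> par l" "k' \<noteq> l'" "par k'" "par l'" by auto
    thus "fundamental_group (Mspace par) x0 \<cong> integer_mod_group 2" by (rule nf2_main[OF _ _ _ _ _ _ assms(4)])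
  qed
qed


end
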